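(* Let $\phi$ be a Drinfeld $A[\underline{t}_s]$-module over $\mathbb{T}_s$ of rank $r$ with $\phi_\theta=\theta+A_1\tau+\dots+A_r\tau^r$, $A_r\in\mathbb{T}_s^\times$. Then the de Rham module $H^*_{\mathrm{DR}}(\phi)=\mathrm{Der}(\phi)/\mathrm{Der}_{si}(\phi)$ is a free $\mathbb{T}_s$-module of rank $r$, with basis the classes of $\delta^0,\delta^1,\dots,\delta^{r-1}$, where $\delta^0_a=\phi_a-a$ for $a\in A[\underline{t}_s]$ and, for $1\le i\le r-1$, $\delta^i$ is the biderivation determined by $\delta^i_\theta=\tau^i$.
   Context: $\mathbb{F}_q$ finite field, $\theta,t_1,\dots,t_s$ independent variables, $A[\underline{t}_s]=\mathbb{F}_q[\theta,t_1,\dots,t_s]$, $\mathbb{F}_q[\underline{t}_s]=\mathbb{F}_q[t_1,\dots,t_s]$. $\mathbb{C}_\infty$: completion of an algebraic closure of $\mathbb{F}_q((1/\theta))$. $\mathbb{T}_s$: Tate algebra of power series in $t_1,\dots,t_s$ over $\mathbb{C}_\infty$ with coefficients tending to $0$. $\tau$ raises coefficients to the $q$-th power, $f^{(n)}=\tau^n(f)$; $\mathbb{T}_s[\tau]$ is the twisted polynomial ring with $\tau f=f^{(1)}\tau$. A Drinfeld $A[\underline{t}_s]$-module of rank $r$ is an $\mathbb{F}_q[\underline{t}_s]$-algebra homomorphism $\phi:A[\underline{t}_s]\to\mathbb{T}_s[\tau]$ with $\phi_\theta=\theta+A_1\tau+\dots+A_r\tau^r$, $A_r\ne0$. A biderivation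 is an $\mathbb{F}_q[\underline{t}_s]$-linear $\eta:A[\underline{t}_s]\to\tau\mathbb{T}_s[\tau]$ with $\eta_{ab}=a\eta_b+\eta_a\phi_b$ for all $a,b$; a biderivation is determined by $\eta_\theta$, and every element of $\tau\mathbb{T}_s[\tau]$ occurs as $\eta_\theta$. $\mathrm{Der}(\phi)$ is the left $\mathbb{T}_s$-module of biderivations, $(f\eta)_a=f\eta_a$. For $m\in\tau\mathbb{T}_s[\tau]$, $\eta^{\{m\}}_a=m\phi_a-am$ defines a strictly inner biderivation; $\mathrm{Der}_{si}(\phi)$ is the submodule of these. (Note $\delta^0=\eta^{\{1\}}$ is a biderivation but with $1\notin\tau\mathbb{T}_s[\tau]$.) *)

theory Defs
  imports "HOL-Computational_Algebra.Polynomial" "HOL-Computational_Algebra.Primes"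
begin

text \<open>C_infinity is the completion of an algebraic closure of F_q((1/theta)). We characterise it as:
  v a non-archimedean absolute value, 'c complete and algebraically closed, v theta > 1
  (so v restricts to the infinite place on F_q(theta)), and the elements algebraic over
  F_q[theta] are dense.\<close>

definition Fq :: "nat \<Rightarrow> 'c::field set" where
  "Fq q = {x. x ^ q = x}"

definition FqTheta :: "nat \<Rightarrow> 'c::field \<Rightarrow> 'c set" where
  "FqTheta q \<theta> = {poly p \<theta> | p. \<forall>i. coeff p i \<in> Fq q}"

definition is_C_infinity :: "nat \<Rightarrow> nat \<Rightarrow> 'c::field \<Rightarrow> ('c \<Rightarrow> real) \<Rightarrow> bool" where
  "is_C_infinity p q \<theta> v \<longleftrightarrow>
     prime p \<and> (\<exists>e>0. q = p ^ e) \<and> CHAR('c) = p \<and>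
     (\<forall>x. 0 \<le> v x) \<and> (\<forall>x. v x = 0 \<longleftrightarrow> x = 0) \<and>
     (\<forall>x y. v (x * y) = v x * v y) \<and> (\<forall>x y. v (x + y) \<le> max (v x) (v y)) \<and>
     (\<forall>X::nat \<Rightarrow> 'c. (\<forall>\<epsilon>>0. \<exists>N. \<forall>m\<ge>N. \<forall>n\<ge>N. v (X m - X n) < \<epsilon>) \<longrightarrow>
         (\<exists>L. \<forall>\<epsilon>>0. \<exists>N. \<forall>n\<ge>N. v (X n - L) < \<epsilon>)) \<and>
     (\<forall>P::'c poly. 0 < degree P \<longrightarrow> (\<exists>x. poly P x = 0)) \<and>
     1 < v \<theta> \<and>
     (\<forall>x. \<forall>\<epsilon>>0. \<exists>y. v (x - y) < \<epsilon> \<and>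
         (\<exists>P::'c poly. P \<noteq> 0 \<and> (\<forall>i. coeff P i \<in> FqTheta q \<theta>) \<and> poly P y = 0))"

text \<open>Elements of T_s: coefficient functions on multi-indices (nat => nat) supported in
  {..<s}, i.e. power series in t_0,...,t_{s-1}.\<close>

type_synonym 'c tate = "(nat \<Rightarrow> nat) \<Rightarrow> 'c"
type_synonym 'c tpoly = "nat \<Rightarrow> 'c tate"

definition mindex :: "nat \<Rightarrow> (nat \<Rightarrow> nat) set" where
  "mindex s = {\<alpha>. \<forall>i\<ge>s. \<alpha> i = 0}"

definition tate_alg :: "('c::field \<Rightarrow> real) \<Rightarrow> nat \<Rightarrow> 'c tate set" where
  "tate_alg v s = {f. (\<forall>\<alpha>. \<alpha> \<notin> mindex s \<longrightarrow> f \<alpha> = 0) \<and>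
                      (\<forall>\<epsilon>>0. finite {\<alpha>. \<epsilon> \<le> v (f \<alpha>)})}"

definition tzero :: "'c::field tate" where "tzero = (\<lambda>_. 0)"
definition tconst :: "'c::field \<Rightarrow> 'c tate" where
  "tconst c = (\<lambda>\<alpha>. if \<alpha> = (\<lambda>_. 0) then c else 0)"
definition tone :: "'c::field tate" where "tone = tconst 1"
definition tadd :: "'c::field tate \<Rightarrow> 'c tate \<Rightarrow> 'c tate" where
  "tadd f g = (\<lambda>\<alpha>. f \<alpha> + g \<alpha>)"
definition tmul :: "'c::field tate \<Rightarrow> 'c tate \<Rightarrow> 'c tate" where
  "tmul f g = (\<lambda>\<alpha>. \<Sum>\<beta>\<in>{\<beta>. \<forall>i. \<beta> i \<le> \<alpha> i}. f \<beta> * g (\<lambda>i. \<alpha> i - \<beta> i))"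
definition ttau :: "nat \<Rightarrow> 'c::field tate \<Rightarrow> 'c tate" where
  "ttau q f = (\<lambda>\<alpha>. f \<alpha> ^ q)"

definition tp_carrier :: "('c::field \<Rightarrow> real) \<Rightarrow> nat \<Rightarrow> 'c tpoly set" where
  "tp_carrier v s = {P. (\<forall>n. P n \<in> tate_alg v s) \<and> finite {n. P n \<noteq> tzero}}"
definition tp_tau_carrier :: "('c::field \<Rightarrow> real) \<Rightarrow> nat \<Rightarrow> 'c tpoly set" where
  "tp_tau_carrier v s = {P \<in> tp_carrier v s. P 0 = tzero}"
definition tp_zero :: "'c::field tpoly" where "tp_zero = (\<lambda>_. tzero)"
definition tp_const :: "'c::field tate \<Rightarrow> 'c tpoly" where
  "tp_const f = (\<lambda>n. if n = 0 then f else tzero)"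
definition tp_tau_pow :: "nat \<Rightarrow> 'c::field tpoly" where
  "tp_tau_pow i = (\<lambda>n. if n = i then tone else tzero)"
definition tp_add :: "'c::field tpoly \<Rightarrow> 'c tpoly \<Rightarrow> 'c tpoly" where
  "tp_add P Q = (\<lambda>n \<alpha>. P n \<alpha> + Q n \<alpha>)"
definition tp_sub :: "'c::field tpoly \<Rightarrow> 'c tpoly \<Rightarrow> 'c tpoly" where
  "tp_sub P Q = (\<lambda>n \<alpha>. P n \<alpha> - Q n \<alpha>)"
text \<open>(sum a_i tau^i)(sum b_j tau^j) = sum a_i b_j^(i) tau^(i+j)\<close>
definition tp_mul :: "nat \<Rightarrow> 'c::field tpoly \<Rightarrow> 'c tpoly \<Rightarrow> 'c tpoly" where
  "tp_mul q P Q = (\<lambda>n \<alpha>. \<Sum>i\<le>n. tmul (P i) ((ttau q ^^ i) (Q (n - i))) \<alpha>)"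

definition Fq_t :: "nat \<Rightarrow> nat \<Rightarrow> 'c::field tate set" where
  "Fq_t s q = {a. (\<forall>\<alpha>. \<alpha> \<notin> mindex s \<longrightarrow> a \<alpha> = 0) \<and> finite {\<alpha>. a \<alpha> \<noteq> 0} \<and>
                 (\<forall>\<alpha>. a \<alpha> \<in> Fq q)}"
definition A_t :: "nat \<Rightarrow> nat \<Rightarrow> 'c::field \<Rightarrow> 'c tate set" where
  "A_t s q \<theta> = {a. (\<forall>\<alpha>. \<alpha> \<notin> mindex s \<longrightarrow> a \<alpha> = 0) \<and> finite {\<alpha>. a \<alpha> \<noteq> 0} \<and>
                 (\<forall>\<alpha>. a \<alpha> \<in> FqTheta q \<theta>)}"

definition drinfeld_module ::
  "('c::field \<Rightarrow> real) \<Rightarrow> nat \<Rightarrow> nat \<Rightarrow> 'c \<Rightarrow> ('c tate \<Rightarrow> 'c tpoly) \<Rightarrow> nat \<Rightarrow> bool" where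
  "drinfeld_module v s q \<theta> \<phi> r \<longleftrightarrow>
     (\<forall>a\<in>A_t s q \<theta>. \<phi> a \<in> tp_carrier v s) \<and>
     (\<forall>a\<in>A_t s q \<theta>. \<forall>b\<in>A_t s q \<theta>. \<phi> (tadd a b) = tp_add (\<phi> a) (\<phi> b)) \<and>
     (\<forall>a\<in>A_t s q \<theta>. \<forall>b\<in>A_t s q \<theta>. \<phi> (tmul a b) = tp_mul q (\<phi> a) (\<phi> b)) \<and>
     (\<forall>c\<in>Fq_t s q. \<phi> c = tp_const c) \<and>
     1 \<le> r \<and> \<phi> (tconst \<theta>) 0 = tconst \<theta> \<and>
     (\<forall>i>r. \<phi> (tconst \<theta>) i = tzero) \<and> \<phi> (tconst \<theta>) r \<noteq> tzero"

definition Der ::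
  "('c::field \<Rightarrow> real) \<Rightarrow> nat \<Rightarrow> nat \<Rightarrow> 'c \<Rightarrow> ('c tate \<Rightarrow> 'c tpoly) \<Rightarrow> ('c tate \<Rightarrow> 'c tpoly) set" where
  "Der v s q \<theta> \<phi> = {\<eta>.
     (\<forall>a. a \<notin> A_t s q \<theta> \<longrightarrow> \<eta> a = tp_zero) \<and>
     (\<forall>a\<in>A_t s q \<theta>. \<eta> a \<in> tp_tau_carrier v s) \<and>
     (\<forall>a\<in>A_t s q \<theta>. \<forall>b\<in>A_t s q \<theta>. \<eta> (tadd a b) = tp_add (\<eta> a) (\<eta> b)) \<and>
     (\<forall>c\<in>Fq_t s q. \<forall>a\<in>A_t s q \<theta>. \<eta> (tmul c a) = tp_mul q (tp_const c) (\<eta> a)) \<and>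
     (\<forall>a\<in>A_t s q \<theta>. \<forall>b\<in>A_t s q \<theta>.
        \<eta> (tmul a b) = tp_add (tp_mul q (tp_const a) (\<eta> b)) (tp_mul q (\<eta> a) (\<phi> b)))}"

definition Der_si ::
  "('c::field \<Rightarrow> real) \<Rightarrow> nat \<Rightarrow> nat \<Rightarrow> 'c \<Rightarrow> ('c tate \<Rightarrow> 'c tpoly) \<Rightarrow> ('c tate \<Rightarrow> 'c tpoly) set" where
  "Der_si v s q \<theta> \<phi> = {\<eta>. \<exists>m\<in>tp_tau_carrier v s. \<forall>a.
      \<eta> a = (if a \<in> A_t s q \<theta> then tp_sub (tp_mul q m (\<phi> a)) (tp_mul q (tp_const a) m)
             else tp_zero)}"

definition delta0 :: "nat \<Rightarrow> nat \<Rightarrow> 'c::field \<Rightarrow> ('c tate \<Rightarrow> 'c tpoly) \<Rightarrow> 'c tate \<Rightarrow> 'c tpoly" where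
  "delta0 s q \<theta> \<phi> = (\<lambda>a. if a \<in> A_t s q \<theta> then tp_sub (\<phi> a) (tp_const a) else tp_zero)"

definition bd_sub :: "('c::field tate \<Rightarrow> 'c tpoly) \<Rightarrow> ('c tate \<Rightarrow> 'c tpoly) \<Rightarrow> 'c tate \<Rightarrow> 'c tpoly" where
  "bd_sub \<eta> \<zeta> = (\<lambda>a. tp_sub (\<eta> a) (\<zeta> a))"
definition bd_lincomb ::
  "nat \<Rightarrow> (nat \<Rightarrow> 'c::field tate) \<Rightarrow> (nat \<Rightarrow> 'c tate \<Rightarrow> 'c tpoly) \<Rightarrow> nat \<Rightarrow> 'c tate \<Rightarrow> 'c tpoly" where
  "bd_lincomb q c \<delta> r = (\<lambda>a n \<alpha>. \<Sum>i<r. tp_mul q (tp_const (c i)) (\<delta> i a) n \<alpha>)"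

end

theory Submission
  imports Defs "HOL-Computational_Algebra.Primes"
begin

definition le_set :: "(nat \<Rightarrow> nat) \<Rightarrow> (nat \<Rightarrow> nat) set" where
  "le_set \<alpha> = {\<beta>. \<forall>i. \<beta> i \<le> \<alpha> i}"
definition fs :: "(nat \<Rightarrow> nat) \<Rightarrow> bool" where
  "fs \<alpha> \<longleftrightarrow> finite {i. \<alpha> i \<noteq> 0}"
definition van :: "'c::field tate \<Rightarrow> bool" where
  "van f \<longleftrightarrow> (\<forall>\<alpha>. \<not> fs \<alpha> \<longrightarrow> f \<alpha> = 0)"

lemma tmul_le: "tmul f g \<alpha> = (\<Sum>\<beta>\<in>le_set \<alpha>. f \<beta> * g (\<lambda>i. \<alpha> i - \<beta> i))"
  by (simp add: tmul_def le_set_def)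

lemma finite_le_set: assumes "fs \<alpha>" shows "finite (le_set \<alpha>)"
proof -
  let ?A = "{i. \<alpha> i \<noteq> 0}"
  let ?M = "Max (\<alpha> ` ?A)"
  have fA: "finite ?A" using assms fs_def by auto
  have sub: "le_set \<alpha> \<subseteq> {f. \<forall>x. (x \<in> ?A \<longrightarrow> f x \<in> {0..?M}) \<and> (x \<notin> ?A \<longrightarrow> f x = 0)}"
  proof
    fix \<beta> assume b: "\<beta> \<in> le_set \<alpha>"
    have "\<beta> x \<in> {0..?M}" if "x \<in> ?A" for x
    proof -
      have "\<alpha> x \<le> ?M" using fA that by (intro Max_ge) auto
      moreover have "\<beta> x \<le> \<alpha> x" using b by (simp add: le_set_def)
      ultimately show ?thesis by simp
    qed
    moreover have "\<beta> x = 0" if "x \<notin> ?A" for x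
      using b that by (simp add: le_set_def) (metis le_zero_eq)
    ultimately show "\<beta> \<in> {f. \<forall>x. (x \<in> ?A \<longrightarrow> f x \<in> {0..?M}) \<and> (x \<notin> ?A \<longrightarrow> f x = 0)}"
      by blast
  qed
  have "finite {f. \<forall>x. (x \<in> ?A \<longrightarrow> f x \<in> {0..?M}) \<and> (x \<notin> ?A \<longrightarrow> f x = (0::nat))}"
    by (rule finite_set_of_finite_funs) (use fA in auto)
  with sub show ?thesis by (rule finite_subset)
qed

lemma infinite_le_set: assumes "\<not> fs \<alpha>" shows "infinite (le_set \<alpha>)"
proof
  assume f: "finite (le_set \<alpha>)"
  define g where "g = (\<lambda>i j. if j = i then \<alpha> i else (0::nat))"
  have inj: "inj_on g {i. \<alpha> i \<noteq> 0}"
  proof (rule inj_onI)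
    fix i j assume i: "i \<in> {i. \<alpha> i \<noteq> 0}" and e: "g i = g j"
    have "g i i = g j i" using e by simp
    thus "i = j" using i unfolding g_def by (auto split: if_splits)
  qed
  have sub: "g ` {i. \<alpha> i \<noteq> 0} \<subseteq> le_set \<alpha>" by (auto simp: le_set_def g_def)
  have "finite (g ` {i. \<alpha> i \<noteq> 0})" using f sub by (rule finite_subset[rotated])
  hence "finite {i. \<alpha> i \<noteq> 0}" using inj by (rule finite_imageD)
  thus False using assms fs_def by auto
qed

lemma tmul_nfs: "\<not> fs \<alpha> \<Longrightarrow> tmul f g \<alpha> = 0"
  by (simp add: tmul_le infinite_le_set)

lemma fs_le: assumes "fs \<alpha>" "\<beta> \<in> le_set \<alpha>" shows "fs \<beta>"
proof -
  have "{i. \<beta> i \<noteq> 0} \<subseteq> {i. \<alpha> i \<noteq> 0}"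
  proof
    fix i assume "i \<in> {i. \<beta> i \<noteq> 0}"
    moreover have "\<beta> i \<le> \<alpha> i" using assms(2) by (simp add: le_set_def)
    ultimately show "i \<in> {i. \<alpha> i \<noteq> 0}" by simp
  qed
  thus ?thesis using assms(1) unfolding fs_def by (rule finite_subset)
qed

lemma fs_diff: "fs \<alpha> \<Longrightarrow> fs (\<lambda>i. \<alpha> i - \<beta> i)"
  unfolding fs_def by (rule finite_subset[of _ "{i. \<alpha> i \<noteq> 0}"]) auto

lemma le_set_diff: "\<beta> \<in> le_set \<alpha> \<Longrightarrow> (\<lambda>i. \<alpha> i - \<beta> i) \<in> le_set \<alpha>"
  by (simp add: le_set_def)
lemma diff_diff_le: "\<beta> \<in> le_set \<alpha> \<Longrightarrow> (\<lambda>i. \<alpha> i - (\<alpha> i - \<beta> i)) = \<beta>"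
  by (rule ext) (simp add: le_set_def)

lemma van_tmul: "van (tmul f g)" by (simp add: van_def tmul_nfs)

lemma tmul_comm: "tmul f g = tmul g f"
proof
  fix \<alpha>
  show "tmul f g \<alpha> = tmul g f \<alpha>"
  proof (cases "fs \<alpha>")
    case False thus ?thesis by (simp add: tmul_nfs)
  next
    case True
    show ?thesis unfolding tmul_le
      by (rule sum.reindex_bij_witness[of _ "\<lambda>\<beta> i. \<alpha> i - \<beta> i" "\<lambda>\<beta> i. \<alpha> i - \<beta> i"])
         (simp_all add: le_set_diff diff_diff_le mult.commute)
  qed
qed

lemma tmul_tzero[simp]: "tmul f tzero = tzero" "tmul tzero f = tzero"
  by (auto simp: tmul_def tzero_def)

lemma tmul_add_right: "tmul f (tadd g h) = tadd (tmul f g) (tmul f h)"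
  by (auto simp: tmul_def tadd_def distrib_left sum.distrib)
lemma tmul_add_left: "tmul (tadd g h) f = tadd (tmul g f) (tmul h f)"
  by (metis tmul_comm tmul_add_right)
lemma tmul_diff_right: "tmul f (\<lambda>\<alpha>. g \<alpha> - h \<alpha>) = (\<lambda>\<alpha>. tmul f g \<alpha> - tmul f h \<alpha>)"
  by (auto simp: tmul_def right_diff_distrib sum_subtractf)
lemma tmul_diff_left: "tmul (\<lambda>\<alpha>. g \<alpha> - h \<alpha>) f = (\<lambda>\<alpha>. tmul g f \<alpha> - tmul h f \<alpha>)"
  by (metis (no_types) tmul_comm tmul_diff_right)
lemma tmul_sum_right: "tmul f (\<lambda>\<alpha>. \<Sum>i\<in>I. g i \<alpha>) = (\<lambda>\<alpha>. \<Sum>i\<in>I. tmul f (g i) \<alpha>)"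
  unfolding tmul_def by (rule ext) (simp add: sum_distrib_left, rule sum.swap)
lemma tmul_sum_left: "tmul (\<lambda>\<alpha>. \<Sum>i\<in>I. g i \<alpha>) f = (\<lambda>\<alpha>. \<Sum>i\<in>I. tmul (g i) f \<alpha>)"
  by (subst tmul_comm, subst tmul_sum_right) (subst tmul_comm, rule refl)

lemma le_set_self: "\<alpha> \<in> le_set \<alpha>" by (simp add: le_set_def)
lemma le_set_zero: "(\<lambda>_. 0) \<in> le_set \<alpha>" by (simp add: le_set_def)

lemma tmul_tconst_left: assumes "van f" shows "tmul (tconst c) f = (\<lambda>\<alpha>. c * f \<alpha>)"
proof
  fix \<alpha> show "tmul (tconst c) f \<alpha> = c * f \<alpha>"
  proof (cases "fs \<alpha>")
    case False thus ?thesis using assms by (simp add: tmul_nfs van_def)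
  next
    case True
    have "tmul (tconst c) f \<alpha> = (\<Sum>\<beta>\<in>{\<lambda>_. 0}. tconst c \<beta> * f (\<lambda>i. \<alpha> i - \<beta> i))"
      unfolding tmul_le
      by (rule sum.mono_neutral_right) (auto simp: finite_le_set True le_set_zero tconst_def)
    thus ?thesis by (simp add: tconst_def)
  qed
qed

lemma tmul_tconst_right: "van f \<Longrightarrow> tmul f (tconst c) = (\<lambda>\<alpha>. c * f \<alpha>)"
  by (subst tmul_comm) (rule tmul_tconst_left)
lemma tmul_tone_left: "van f \<Longrightarrow> tmul tone f = f"
  by (simp add: tone_def tmul_tconst_left)
lemma tmul_tone_right: "van f \<Longrightarrow> tmul f tone = f"
  by (simp add: tone_def tmul_tconst_right)

lemma tmul_assoc: "tmul (tmul f g) h = tmul f (tmul g h)"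
proof
  fix \<alpha>
  show "tmul (tmul f g) h \<alpha> = tmul f (tmul g h) \<alpha>"
  proof (cases "fs \<alpha>")
    case False thus ?thesis by (simp add: tmul_nfs)
  next
    case True
    have fin1: "finite (le_set \<alpha>)" using True by (rule finite_le_set)
    have fin2: "\<And>\<beta>. \<beta> \<in> le_set \<alpha> \<Longrightarrow> finite (le_set \<beta>)"
      using True fs_le finite_le_set by blast
    have fin3: "\<And>\<gamma>. finite (le_set (\<lambda>i. \<alpha> i - \<gamma> i))"
      using True fs_diff finite_le_set by blast
    have "tmul (tmul f g) h \<alpha> = (\<Sum>\<beta>\<in>le_set \<alpha>. \<Sum>\<gamma>\<in>le_set \<beta>. f \<gamma> * g (\<lambda>i. \<beta> i - \<gamma> i) * h (\<lambda>i. \<alpha> i - \<beta> i))"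
      by (simp add: tmul_le sum_distrib_right)
    also have "\<dots> = (\<Sum>(\<beta>,\<gamma>)\<in>Sigma (le_set \<alpha>) le_set. f \<gamma> * g (\<lambda>i. \<beta> i - \<gamma> i) * h (\<lambda>i. \<alpha> i - \<beta> i))"
      by (rule sum.Sigma) (use fin1 fin2 in auto)
    also have "\<dots> = (\<Sum>(\<gamma>,\<delta>)\<in>Sigma (le_set \<alpha>) (\<lambda>\<gamma>. le_set (\<lambda>i. \<alpha> i - \<gamma> i)).
                       f \<gamma> * (g \<delta> * h (\<lambda>i. (\<alpha> i - \<gamma> i) - \<delta> i)))"
    proof (rule sum.reindex_bij_witness[of _ "\<lambda>(\<gamma>,\<delta>). (\<lambda>i. \<gamma> i + \<delta> i, \<gamma>)" "\<lambda>(\<beta>,\<gamma>). (\<gamma>, \<lambda>i. \<beta> i - \<gamma> i)"])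
      fix a assume a: "a \<in> Sigma (le_set \<alpha>) le_set"
      obtain \<beta> \<gamma> where e: "a = (\<beta>,\<gamma>)" by (cases a)
      have b: "\<forall>i. \<beta> i \<le> \<alpha> i" and c: "\<forall>i. \<gamma> i \<le> \<beta> i" using a e by (auto simp: le_set_def)
      show "(case case a of (\<beta>, \<gamma>) \<Rightarrow> (\<gamma>, \<lambda>i. \<beta> i - \<gamma> i) of (\<gamma>, \<delta>) \<Rightarrow> (\<lambda>i. \<gamma> i + \<delta> i, \<gamma>)) = a"
        using e c by (auto intro!: ext)
      show "(case a of (\<beta>, \<gamma>) \<Rightarrow> (\<gamma>, \<lambda>i. \<beta> i - \<gamma> i)) \<in> Sigma (le_set \<alpha>) (\<lambda>\<gamma>. le_set (\<lambda>i. \<alpha> i - \<gamma> i))"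
        using e b c by (auto simp: le_set_def intro: order_trans diff_le_mono)
      have "(\<lambda>i. \<alpha> i - \<gamma> i - (\<beta> i - \<gamma> i)) = (\<lambda>i. \<alpha> i - \<beta> i)"
        using b c by (auto intro!: ext)
      then show "(case case a of (\<beta>, \<gamma>) \<Rightarrow> (\<gamma>, \<lambda>i. \<beta> i - \<gamma> i) of
           (\<gamma>, \<delta>) \<Rightarrow> f \<gamma> * (g \<delta> * h (\<lambda>i. \<alpha> i - \<gamma> i - \<delta> i))) =
          (case a of (\<beta>, \<gamma>) \<Rightarrow> f \<gamma> * g (\<lambda>i. \<beta> i - \<gamma> i) * h (\<lambda>i. \<alpha> i - \<beta> i))"
        using e by (simp add: mult.assoc)
    next
      fix a assume a: "a \<in> Sigma (le_set \<alpha>) (\<lambda>\<gamma>. le_set (\<lambda>i. \<alpha> i - \<gamma> i))"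
      obtain \<gamma> \<delta> where e: "a = (\<gamma>,\<delta>)" by (cases a)
      have b: "\<forall>i. \<gamma> i \<le> \<alpha> i" and c: "\<forall>i. \<delta> i \<le> \<alpha> i - \<gamma> i" using a e by (auto simp: le_set_def)
      show "(case case a of (\<gamma>, \<delta>) \<Rightarrow> (\<lambda>i. \<gamma> i + \<delta> i, \<gamma>) of (\<beta>, \<gamma>) \<Rightarrow> (\<gamma>, \<lambda>i. \<beta> i - \<gamma> i)) = a"
        using e by auto
      show "(case a of (\<gamma>, \<delta>) \<Rightarrow> (\<lambda>i. \<gamma> i + \<delta> i, \<gamma>)) \<in> Sigma (le_set \<alpha>) le_set"
        using e b c by (auto simp: le_set_def) (metis le_add_diff_inverse add_le_mono1 le_diff_conv2 add.commute)
    qed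
    also have "\<dots> = (\<Sum>\<gamma>\<in>le_set \<alpha>. \<Sum>\<delta>\<in>le_set (\<lambda>i. \<alpha> i - \<gamma> i). f \<gamma> * (g \<delta> * h (\<lambda>i. (\<alpha> i - \<gamma> i) - \<delta> i)))"
      by (rule sum.Sigma[symmetric]) (use fin1 fin3 in auto)
    also have "\<dots> = tmul f (tmul g h) \<alpha>"
      by (simp add: tmul_le sum_distrib_left)
    finally show ?thesis .
  qed
qed

lemma frob_prime:
  fixes x y :: "'c::field"
  assumes p: "prime p" and ch: "CHAR('c) = p"
  shows "(x + y) ^ p = x ^ p + y ^ p"
proof -
  have "(x + y) ^ p = (\<Sum>k\<le>p. of_nat (p choose k) * x ^ k * y ^ (p - k))"
    by (rule binomial_ring)
  also have "\<dots> = (\<Sum>k\<in>{0,p}. of_nat (p choose k) * x ^ k * y ^ (p - k))"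
  proof (rule sum.mono_neutral_right)
    show "finite {..p}" by simp
    show "{0, p} \<subseteq> {..p}" by auto
    show "\<forall>k\<in>{..p} - {0, p}. of_nat (p choose k) * x ^ k * y ^ (p - k) = 0"
    proof
      fix k assume k: "k \<in> {..p} - {0, p}"
      have "p dvd (p choose k)"
        using k p by (intro dvd_choose_prime) (auto simp: prime_gt_0_nat)
      hence "of_nat (p choose k) = (0::'c)" using ch by (simp add: of_nat_eq_0_iff_char_dvd)
      thus "of_nat (p choose k) * x ^ k * y ^ (p - k) = 0" by simp
    qed
  qed
  also have "\<dots> = x ^ p + y ^ p" using p by (simp add: prime_gt_0_nat add.commute)
  finally show ?thesis .
qed

lemma frob_pow:
  fixes x y :: "'c::field"
  assumes p: "prime p" and ch: "CHAR('c) = p"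
  shows "(x + y) ^ (p ^ e) = x ^ (p ^ e) + y ^ (p ^ e)"
proof (induction e)
  case 0 thus ?case by simp
next
  case (Suc e)
  have pe: "p ^ Suc e = p ^ e * p" by simp
  have "(x + y) ^ (p ^ Suc e) = ((x + y) ^ (p ^ e)) ^ p" by (simp only: pe power_mult)
  also have "\<dots> = (x ^ (p ^ e) + y ^ (p ^ e)) ^ p" using Suc by simp
  also have "\<dots> = (x ^ (p ^ e)) ^ p + (y ^ (p ^ e)) ^ p" using p ch by (rule frob_prime)
  also have "\<dots> = x ^ (p ^ Suc e) + y ^ (p ^ Suc e)" by (simp only: pe power_mult)
  finally show ?case .
qed

locale dctx =
  fixes v :: "'c::field \<Rightarrow> real" and q :: nat
  assumes q_pos: "0 < q"
    and frob: "\<And>x y::'c. (x + y) ^ q = x ^ q + y ^ q"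
    and v_nonneg: "\<And>x. 0 \<le> v x"
    and v_zero: "\<And>x. v x = 0 \<longleftrightarrow> x = 0"
    and v_mult: "\<And>x y. v (x * y) = v x * v y"
    and v_ultra: "\<And>x y. v (x + y) \<le> max (v x) (v y)"
begin

lemma v_0[simp]: "v 0 = 0" using v_zero by simp

lemma zero_pow[simp]: "(0::'c) ^ q = 0" using q_pos by simp

lemma frob_minus: "(- x :: 'c) ^ q = - (x ^ q)"
proof -
  have "(- x + x) ^ q = (-x)^q + x^q" by (rule frob)
  thus ?thesis by (simp add: eq_neg_iff_add_eq_0)
qed

lemma frob_diff: "(x - y :: 'c) ^ q = x ^ q - y ^ q"
  using frob[of x "-y"] by (simp add: frob_minus)

lemma frob_sum: "(\<Sum>i\<in>I. f i :: 'c) ^ q = (\<Sum>i\<in>I. f i ^ q)"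
proof (cases "finite I")
  case True thus ?thesis by (induction I rule: finite_induct) (simp_all add: frob)
qed simp

lemma v_one: "v 1 = 1"
proof -
  have "v 1 = v 1 * v 1" using v_mult[of 1 1] by simp
  moreover have "v 1 \<noteq> 0" using v_zero by simp
  ultimately show ?thesis by (metis mult_cancel_right1)
qed

lemma v_minus: "v (- x) = v x"
proof -
  have "v (-1) * v (-1) = 1" using v_mult[of "-1" "-1"] v_one by simp
  hence "(v (-1) - 1) * (v (-1) + 1) = 0" by (simp add: algebra_simps)
  moreover have "v (-1) + 1 \<noteq> 0" using v_nonneg[of "-1"] by linarith
  ultimately have "v (-1) = 1" by simp
  thus ?thesis using v_mult[of "-1" x] by simp
qed

lemma v_diff: "v (x - y) \<le> max (v x) (v y)"
  using v_ultra[of x "-y"] by (simp add: v_minus)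

lemma v_sum_lt: assumes "finite I" "0 < e" "\<And>i. i \<in> I \<Longrightarrow> v (f i) < e"
  shows "v (\<Sum>i\<in>I. f i) < e"
  using assms
proof (induction I rule: finite_induct)
  case empty thus ?case using v_zero by simp
next
  case (insert x F)
  have "v (f x + sum f F) \<le> max (v (f x)) (v (sum f F))" by (rule v_ultra)
  moreover have "v (f x) < e" using insert by simp
  moreover have "v (sum f F) < e" using insert by simp
  ultimately have "v (f x + sum f F) < e" by linarith
  thus ?case using insert by simp
qed

lemma v_pow: "v (x ^ n) = v x ^ n"
  by (induction n) (simp_all add: v_one v_mult)

end

context dctx begin

lemma ttau_tmul: "ttau q (tmul (f::'c tate) g) = tmul (ttau q f) (ttau q g)"
  by (rule ext) (simp add: ttau_def tmul_le frob_sum power_mult_distrib)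
lemma ttau_tadd: "ttau q (tadd (f::'c tate) g) = tadd (ttau q f) (ttau q g)"
  by (rule ext) (simp add: ttau_def tadd_def frob)
lemma ttau_diff: "ttau q (\<lambda>\<alpha>. (f::'c tate) \<alpha> - g \<alpha>) = (\<lambda>\<alpha>. ttau q f \<alpha> - ttau q g \<alpha>)"
  by (rule ext) (simp add: ttau_def frob_diff)
lemma ttau_sum: "ttau q (\<lambda>\<alpha>. \<Sum>i\<in>I. (g i \<alpha> :: 'c)) = (\<lambda>\<alpha>. \<Sum>i\<in>I. ttau q (g i) \<alpha>)"
  by (rule ext) (simp add: ttau_def frob_sum)
lemma ttau_tzero[simp]: "ttau q (tzero::'c tate) = tzero"
  by (rule ext) (simp add: ttau_def tzero_def)
lemma ttau_tconst: "ttau q (tconst (c::'c)) = tconst (c ^ q)"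
  by (rule ext) (simp add: ttau_def tconst_def)
lemma ttau_tone[simp]: "ttau q (tone::'c tate) = tone"
  by (simp add: tone_def ttau_tconst)

lemma ttaus_tmul: "(ttau q ^^ k) (tmul (f::'c tate) g) = tmul ((ttau q ^^ k) f) ((ttau q ^^ k) g)"
  by (induction k) (simp_all add: ttau_tmul)
lemma ttaus_tadd: "(ttau q ^^ k) (tadd (f::'c tate) g) = tadd ((ttau q ^^ k) f) ((ttau q ^^ k) g)"
  by (induction k) (simp_all add: ttau_tadd)
lemma ttaus_diff: "(ttau q ^^ k) (\<lambda>\<alpha>. (f::'c tate) \<alpha> - g \<alpha>) = (\<lambda>\<alpha>. (ttau q ^^ k) f \<alpha> - (ttau q ^^ k) g \<alpha>)"
  by (induction k) (simp_all add: ttau_diff)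
lemma ttaus_sum: "(ttau q ^^ k) (\<lambda>\<alpha>. \<Sum>i\<in>I. (g i \<alpha>::'c)) = (\<lambda>\<alpha>. \<Sum>i\<in>I. (ttau q ^^ k) (g i) \<alpha>)"
  by (induction k) (simp_all add: ttau_sum)
lemma ttaus_tzero[simp]: "(ttau q ^^ k) (tzero::'c tate) = tzero"
  by (induction k) simp_all
lemma ttaus_tone[simp]: "(ttau q ^^ k) (tone::'c tate) = tone"
  by (induction k) simp_all
lemma ttaus_add: "(ttau q ^^ j) ((ttau q ^^ k) (f::'c tate)) = (ttau q ^^ (j + k)) f"
  by (simp add: funpow_add)

lemma van_ttau: "van (f::'c tate) \<Longrightarrow> van (ttau q f)"
  by (simp add: van_def ttau_def)
lemma van_ttaus: "van (f::'c tate) \<Longrightarrow> van ((ttau q ^^ k) f)"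
  by (induction k) (simp_all add: van_ttau)

lemma mindex_fs: "\<alpha> \<in> mindex s \<Longrightarrow> fs \<alpha>"
proof -
  assume a: "\<alpha> \<in> mindex s"
  have "{i. \<alpha> i \<noteq> 0} \<subseteq> {..<s}"
  proof
    fix i assume "i \<in> {i. \<alpha> i \<noteq> 0}"
    thus "i \<in> {..<s}" using a by (cases "i < s") (auto simp: mindex_def)
  qed
  thus ?thesis unfolding fs_def by (rule finite_subset) simp
qed

lemma tate_van: "f \<in> tate_alg v s \<Longrightarrow> van f"
  unfolding van_def tate_alg_def using mindex_fs by blast

lemma tate_finite: "f \<in> tate_alg v s \<Longrightarrow> 0 < e \<Longrightarrow> finite {\<alpha>. e \<le> v (f \<alpha>)}"
  by (simp add: tate_alg_def)
lemma tate_out: "f \<in> tate_alg v s \<Longrightarrow> \<alpha> \<notin> mindex s \<Longrightarrow> f \<alpha> = 0"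
  by (simp add: tate_alg_def)

lemma tate_I: "(\<And>\<alpha>. \<alpha> \<notin> mindex s \<Longrightarrow> f \<alpha> = 0) \<Longrightarrow> (\<And>e. 0 < e \<Longrightarrow> finite {\<alpha>. e \<le> v (f \<alpha>)})
   \<Longrightarrow> f \<in> tate_alg v s"
  by (simp add: tate_alg_def)

lemma tate_tzero[simp]: "tzero \<in> tate_alg v s"
  by (rule tate_I) (simp_all add: tzero_def)

lemma mindex_zero: "(\<lambda>_. 0) \<in> mindex s" by (simp add: mindex_def)

lemma tate_tconst[simp]: "tconst c \<in> tate_alg v s"
proof (rule tate_I)
  show "tconst c \<alpha> = 0" if "\<alpha> \<notin> mindex s" for \<alpha> using that mindex_zero by (auto simp: tconst_def)
  show "finite {\<alpha>. e \<le> v (tconst c \<alpha>)}" if "0 < e" for e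
    by (rule finite_subset[of _ "{\<lambda>_. 0}"]) (use that in \<open>auto simp: tconst_def\<close>)
qed

lemma tate_tone[simp]: "tone \<in> tate_alg v s" by (simp add: tone_def)

lemma tate_tadd: assumes "f \<in> tate_alg v s" "g \<in> tate_alg v s" shows "tadd f g \<in> tate_alg v s"
proof (rule tate_I)
  show "tadd f g \<alpha> = 0" if "\<alpha> \<notin> mindex s" for \<alpha> using that assms by (simp add: tadd_def tate_out)
  show "finite {\<alpha>. e \<le> v (tadd f g \<alpha>)}" if "0 < e" for e
  proof (rule finite_subset[of _ "{\<alpha>. e \<le> v (f \<alpha>)} \<union> {\<alpha>. e \<le> v (g \<alpha>)}"])
    show "{\<alpha>. e \<le> v (tadd f g \<alpha>)} \<subseteq> {\<alpha>. e \<le> v (f \<alpha>)} \<union> {\<alpha>. e \<le> v (g \<alpha>)}"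
    proof
      fix \<alpha> assume "\<alpha> \<in> {\<alpha>. e \<le> v (tadd f g \<alpha>)}"
      hence "e \<le> max (v (f \<alpha>)) (v (g \<alpha>))" using v_ultra[of "f \<alpha>" "g \<alpha>"] by (simp add: tadd_def)
      thus "\<alpha> \<in> {\<alpha>. e \<le> v (f \<alpha>)} \<union> {\<alpha>. e \<le> v (g \<alpha>)}" by (auto simp: le_max_iff_disj)
    qed
    show "finite ({\<alpha>. e \<le> v (f \<alpha>)} \<union> {\<alpha>. e \<le> v (g \<alpha>)})" using assms that tate_finite by blast
  qed
qed

lemma tate_diff: assumes "f \<in> tate_alg v s" "g \<in> tate_alg v s" shows "(\<lambda>\<alpha>. f \<alpha> - g \<alpha>) \<in> tate_alg v s"
proof (rule tate_I)
  show "f \<alpha> - g \<alpha> = 0" if "\<alpha> \<notin> mindex s" for \<alpha> using that assms by (simp add: tate_out)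
  show "finite {\<alpha>. e \<le> v (f \<alpha> - g \<alpha>)}" if "0 < e" for e
  proof (rule finite_subset[of _ "{\<alpha>. e \<le> v (f \<alpha>)} \<union> {\<alpha>. e \<le> v (g \<alpha>)}"])
    show "{\<alpha>. e \<le> v (f \<alpha> - g \<alpha>)} \<subseteq> {\<alpha>. e \<le> v (f \<alpha>)} \<union> {\<alpha>. e \<le> v (g \<alpha>)}"
    proof
      fix \<alpha> assume "\<alpha> \<in> {\<alpha>. e \<le> v (f \<alpha> - g \<alpha>)}"
      hence "e \<le> max (v (f \<alpha>)) (v (g \<alpha>))" using v_diff[of "f \<alpha>" "g \<alpha>"] by simp
      thus "\<alpha> \<in> {\<alpha>. e \<le> v (f \<alpha>)} \<union> {\<alpha>. e \<le> v (g \<alpha>)}" by (auto simp: le_max_iff_disj)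
    qed
    show "finite ({\<alpha>. e \<le> v (f \<alpha>)} \<union> {\<alpha>. e \<le> v (g \<alpha>)})" using assms that tate_finite by blast
  qed
qed

lemma tate_sum: assumes "finite I" "\<And>i. i \<in> I \<Longrightarrow> g i \<in> tate_alg v s"
  shows "(\<lambda>\<alpha>. \<Sum>i\<in>I. g i \<alpha>) \<in> tate_alg v s"
  using assms
proof (induction I rule: finite_induct)
  case empty
  have "(\<lambda>\<alpha>. \<Sum>i\<in>{}. g i \<alpha>) = tzero" by (simp add: tzero_def)
  thus ?case by simp
next
  case (insert x F)
  have "(\<lambda>\<alpha>. \<Sum>i\<in>insert x F. g i \<alpha>) = tadd (g x) (\<lambda>\<alpha>. \<Sum>i\<in>F. g i \<alpha>)"
    using insert by (simp add: tadd_def)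
  thus ?case using insert by (simp add: tate_tadd)
qed

lemma tate_ttau: assumes "f \<in> tate_alg v s" shows "ttau q f \<in> tate_alg v s"
proof (rule tate_I)
  show "ttau q f \<alpha> = 0" if "\<alpha> \<notin> mindex s" for \<alpha> using that assms by (simp add: tate_out ttau_def)
  show "finite {\<alpha>. e \<le> v (ttau q f \<alpha>)}" if e: "0 < e" for e
  proof (rule finite_subset[of _ "{\<alpha>. min 1 e \<le> v (f \<alpha>)}"])
    show "{\<alpha>. e \<le> v (ttau q f \<alpha>)} \<subseteq> {\<alpha>. min 1 e \<le> v (f \<alpha>)}"
    proof
      fix \<alpha> assume a: "\<alpha> \<in> {\<alpha>. e \<le> v (ttau q f \<alpha>)}"
      have ev: "e \<le> v (f \<alpha>) ^ q" using a by (simp add: ttau_def v_pow)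
      show "\<alpha> \<in> {\<alpha>. min 1 e \<le> v (f \<alpha>)}"
      proof (cases "v (f \<alpha>) < 1")
        case True
        have "v (f \<alpha>) ^ q \<le> v (f \<alpha>) ^ 1"
          using True q_pos v_nonneg by (intro power_decreasing) auto
        thus ?thesis using ev by simp
      qed simp
    qed
    show "finite {\<alpha>. min 1 e \<le> v (f \<alpha>)}" using assms e by (intro tate_finite) auto
  qed
qed

lemma tate_ttaus: "f \<in> tate_alg v s \<Longrightarrow> (ttau q ^^ k) f \<in> tate_alg v s"
  by (induction k) (simp_all add: tate_ttau)

lemma tate_bound: assumes "f \<in> tate_alg v s" shows "\<exists>M>0. \<forall>\<alpha>. v (f \<alpha>) \<le> M"
proof -
  let ?S = "{\<alpha>. 1 \<le> v (f \<alpha>)}"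
  have fin: "finite ?S" using assms by (intro tate_finite) auto
  define M where "M = Max (insert 1 ((\<lambda>\<alpha>. v (f \<alpha>)) ` ?S))"
  have "v (f \<alpha>) \<le> M" for \<alpha>
  proof (cases "1 \<le> v (f \<alpha>)")
    case True thus ?thesis unfolding M_def using fin by (intro Max_ge) auto
  next
    case False
    have "1 \<le> M" unfolding M_def using fin by (intro Max_ge) auto
    thus ?thesis using False by simp
  qed
  moreover have "1 \<le> M" unfolding M_def using fin by (intro Max_ge) auto
  ultimately show ?thesis by (intro exI[of _ M]) auto
qed

lemma v_sum_ex: assumes "finite I" "0 < e" "e \<le> v (\<Sum>i\<in>I. f i)"
  shows "\<exists>i\<in>I. e \<le> v (f i)"
  using v_sum_lt[OF assms(1,2), of f] assms(3) by (meson not_le)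

lemma tate_tmul: assumes f: "f \<in> tate_alg v s" and g: "g \<in> tate_alg v s" shows "tmul f g \<in> tate_alg v s"
proof (rule tate_I)
  show "tmul f g \<alpha> = 0" if a: "\<alpha> \<notin> mindex s" for \<alpha>
    unfolding tmul_le
  proof (rule sum.neutral, rule ballI)
    fix \<beta> assume b: "\<beta> \<in> le_set \<alpha>"
    obtain i where i: "i \<ge> s" "\<alpha> i \<noteq> 0" using a by (auto simp: mindex_def)
    show "f \<beta> * g (\<lambda>i. \<alpha> i - \<beta> i) = 0"
    proof (cases "\<beta> i = 0")
      case True
      hence "(\<lambda>i. \<alpha> i - \<beta> i) \<notin> mindex s" using i by (auto simp: mindex_def)
      thus ?thesis using g by (simp add: tate_out)
    next
      case False
      hence "\<beta> \<notin> mindex s" using i by (auto simp: mindex_def)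
      thus ?thesis using f by (simp add: tate_out)
    qed
  qed
  show "finite {\<alpha>. e \<le> v (tmul f g \<alpha>)}" if e: "0 < e" for e
  proof -
    obtain Mf where Mf: "Mf > 0" "\<And>\<alpha>. v (f \<alpha>) \<le> Mf" using tate_bound[OF f] by blast
    obtain Mg where Mg: "Mg > 0" "\<And>\<alpha>. v (g \<alpha>) \<le> Mg" using tate_bound[OF g] by blast
    let ?A = "{\<beta>. e / Mg \<le> v (f \<beta>)}" and ?B = "{\<gamma>. e / Mf \<le> v (g \<gamma>)}"
    have fAB: "finite (?A \<times> ?B)" using f g e Mf Mg by (intro finite_cartesian_product tate_finite) auto
    have "{\<alpha>. e \<le> v (tmul f g \<alpha>)} \<subseteq> (\<lambda>(\<beta>,\<gamma>) i. \<beta> i + \<gamma> i) ` (?A \<times> ?B)"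
    proof
      fix \<alpha> assume a: "\<alpha> \<in> {\<alpha>. e \<le> v (tmul f g \<alpha>)}"
      have "fs \<alpha>"
      proof (rule ccontr)
        assume "\<not> fs \<alpha>" thus False using a e by (simp add: tmul_nfs)
      qed
      then obtain \<beta> where b: "\<beta> \<in> le_set \<alpha>" and ev: "e \<le> v (f \<beta> * g (\<lambda>i. \<alpha> i - \<beta> i))"
        using v_sum_ex[of "le_set \<alpha>" e] a e finite_le_set by (fastforce simp: tmul_le)
      let ?\<gamma> = "\<lambda>i. \<alpha> i - \<beta> i"
      have ev': "e \<le> v (f \<beta>) * v (g ?\<gamma>)" using ev by (simp add: v_mult)
      have "e \<le> v (f \<beta>) * Mg"
        using ev' Mg(2)[of ?\<gamma>] v_nonneg[of "f \<beta>"] by (meson mult_left_mono order_trans)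
      hence A: "\<beta> \<in> ?A" using Mg(1) by (simp add: divide_le_eq)
      have "e \<le> Mf * v (g ?\<gamma>)"
        using ev' Mf(2)[of \<beta>] v_nonneg[of "g ?\<gamma>"] by (meson mult_right_mono order_trans)
      hence B: "?\<gamma> \<in> ?B" using Mf(1) by (simp add: divide_le_eq mult.commute)
      have eq: "\<alpha> = (\<lambda>(\<beta>,\<gamma>) i. \<beta> i + \<gamma> i) (\<beta>, ?\<gamma>)" using b by (auto simp: le_set_def intro!: ext)
      show "\<alpha> \<in> (\<lambda>(\<beta>,\<gamma>) i. \<beta> i + \<gamma> i) ` (?A \<times> ?B)"
        unfolding image_iff using eq A B by blast
    qed
    moreover have "finite ((\<lambda>(\<beta>,\<gamma>) i. \<beta> i + \<gamma> i) ` (?A \<times> ?B))" using fAB by (rule finite_imageI)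
    ultimately show ?thesis by (rule finite_subset)
  qed
qed

end

lemma tzero_apply[simp]: "tzero \<alpha> = 0" by (simp add: tzero_def)

lemma tp_add_apply: "tp_add P Q n = (\<lambda>\<alpha>. P n \<alpha> + Q n \<alpha>)" by (simp add: tp_add_def)
lemma tp_sub_apply: "tp_sub P Q n = (\<lambda>\<alpha>. P n \<alpha> - Q n \<alpha>)" by (simp add: tp_sub_def)
lemma tp_mul_apply: "tp_mul q P Q n = (\<lambda>\<alpha>. \<Sum>i\<le>n. tmul (P i) ((ttau q ^^ i) (Q (n - i))) \<alpha>)"
  by (simp add: tp_mul_def)

lemma tp_mul_const_left: "tp_mul q (tp_const c) P n = tmul c (P n)"
proof -
  have "tp_mul q (tp_const c) P n = (\<lambda>\<alpha>. \<Sum>i\<in>{0}. tmul (tp_const c i) ((ttau q ^^ i) (P (n - i))) \<alpha>)"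
    unfolding tp_mul_apply
    by (rule ext, rule sum.mono_neutral_right) (auto simp: tp_const_def)
  thus ?thesis by (simp add: tp_const_def)
qed

lemma tp_mul_zero_left[simp]: "tp_mul q tp_zero P = tp_zero"
  by (rule ext)+ (simp add: tp_mul_def tp_zero_def)

lemma tp_mul_0: "tp_mul q P Q 0 = tmul (P 0) (Q 0)"
  by (simp add: tp_mul_def)

lemma tmul_eta: "tmul f g = (\<lambda>\<alpha>. tmul f g \<alpha>)" by simp

lemma tp_mul_add_left: "tp_mul q (tp_add P Q) R = tp_add (tp_mul q P R) (tp_mul q Q R)"
  by (rule ext)+ (simp add: tp_mul_def tp_add_def tmul_add_left[unfolded tadd_def] sum.distrib)

lemma tp_mul_sub_left: "tp_mul q (tp_sub P Q) R = tp_sub (tp_mul q P R) (tp_mul q Q R)"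
  by (rule ext)+ (simp add: tp_mul_def tp_sub_def tmul_diff_left sum_subtractf)

lemma tp_sum_apply: "(\<lambda>\<alpha>. \<Sum>i\<in>I. F i \<alpha>) \<alpha>' = (\<Sum>i\<in>I. F i \<alpha>')" by simp

context dctx begin

lemma tp_mul_const_right: "tp_mul q (P::'c tpoly) (tp_const c) n = tmul (P n) ((ttau q ^^ n) c)"
proof -
  have "tp_mul q P (tp_const c) n = (\<lambda>\<alpha>. \<Sum>i\<in>{n}. tmul (P i) ((ttau q ^^ i) (tp_const c (n - i))) \<alpha>)"
    unfolding tp_mul_apply
  proof (rule ext, rule sum.mono_neutral_right)
    fix \<alpha>
    show "\<forall>i\<in>{..n} - {n}. tmul (P i) ((ttau q ^^ i) (tp_const c (n - i))) \<alpha> = 0"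
    proof
      fix i assume "i \<in> {..n} - {n}"
      hence "tp_const c (n - i) = tzero" by (auto simp: tp_const_def)
      thus "tmul (P i) ((ttau q ^^ i) (tp_const c (n - i))) \<alpha> = 0"
        by simp
    qed
  qed auto
  thus ?thesis by (simp add: tp_const_def)
qed


lemma tp_mul_zero_right[simp]: "tp_mul q (P::'c tpoly) tp_zero = tp_zero"
  by (rule ext)+ (simp add: tp_mul_def tp_zero_def)

lemma tp_mul_add_right: "tp_mul q (P::'c tpoly) (tp_add Q R) = tp_add (tp_mul q P Q) (tp_mul q P R)"
  by (rule ext)+ (simp add: tp_mul_def tp_add_def ttaus_tadd[unfolded tadd_def] tmul_add_right[unfolded tadd_def] sum.distrib)

lemma tp_mul_sub_right: "tp_mul q (P::'c tpoly) (tp_sub Q R) = tp_sub (tp_mul q P Q) (tp_mul q P R)"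
  by (rule ext)+ (simp add: tp_mul_def tp_sub_def ttaus_diff tmul_diff_right sum_subtractf)

lemma tp_mul_assoc: "tp_mul q (tp_mul q (P::'c tpoly) Q) R = tp_mul q P (tp_mul q Q R)"
proof (rule ext, rule ext)
  fix n \<alpha>
  define F where "F = (\<lambda>j l. tmul (tmul (P j) ((ttau q ^^ j) (Q l))) ((ttau q ^^ (j + l)) (R (n - (j + l)))) \<alpha>)"
  have "tp_mul q (tp_mul q P Q) R n \<alpha> = (\<Sum>i\<le>n. \<Sum>j\<le>i. tmul (tmul (P j) ((ttau q ^^ j) (Q (i - j)))) ((ttau q ^^ i) (R (n - i))) \<alpha>)"
    by (simp add: tp_mul_apply tmul_sum_left)
  also have "\<dots> = (\<Sum>i\<le>n. \<Sum>j\<le>i. F j (i - j))"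
    by (intro sum.cong refl) (simp add: F_def)
  also have "\<dots> = (\<Sum>(j,l)\<in>{(j,l). j + l \<le> n}. F j l)"
    by (rule sum.triangle_reindex_eq[symmetric])
  also have "{(j,l). j + l \<le> n} = Sigma {..n} (\<lambda>j. {..n - j})" by auto
  also have "(\<Sum>(j,l)\<in>Sigma {..n} (\<lambda>j. {..n - j}). F j l) = (\<Sum>j\<le>n. \<Sum>l\<le>n - j. F j l)"
    by (rule sum.Sigma[symmetric]) auto
  also have "\<dots> = (\<Sum>j\<le>n. \<Sum>l\<le>n - j. tmul (P j) (tmul ((ttau q ^^ j) (Q l)) ((ttau q ^^ j) ((ttau q ^^ l) (R (n - j - l))))) \<alpha>)"
    by (intro sum.cong refl) (simp add: F_def tmul_assoc ttaus_add)
  also have "\<dots> = tp_mul q P (tp_mul q Q R) n \<alpha>"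
    by (simp add: tp_mul_apply ttaus_sum ttaus_tmul tmul_sum_right)
  finally show "tp_mul q (tp_mul q P Q) R n \<alpha> = tp_mul q P (tp_mul q Q R) n \<alpha>" .
qed

end

context dctx begin

lemma fin_supp_iff: "finite {n. (P::'c tpoly) n \<noteq> tzero} \<longleftrightarrow> (\<exists>N. \<forall>n>N. P n = tzero)"
  unfolding finite_nat_set_iff_bounded_le
proof
  assume "\<exists>m. \<forall>n\<in>{n. P n \<noteq> tzero}. n \<le> m"
  then obtain m where m: "\<And>n. P n \<noteq> tzero \<Longrightarrow> n \<le> m" by blast
  have "\<forall>n>m. P n = tzero"
  proof (intro allI impI)
    fix n assume mn: "m < n" show "P n = tzero"
    proof (rule ccontr)
      assume "P n \<noteq> tzero" hence "n \<le> m" by (rule m)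
      with mn show False by simp
    qed
  qed
  thus "\<exists>N. \<forall>n>N. P n = tzero" by blast
next
  assume "\<exists>N. \<forall>n>N. P n = tzero"
  then obtain N where N: "\<And>n. n > N \<Longrightarrow> P n = tzero" by blast
  have "\<forall>n\<in>{n. P n \<noteq> tzero}. n \<le> N"
  proof
    fix n assume "n \<in> {n. P n \<noteq> tzero}" thus "n \<le> N" using N[of n] by force
  qed
  thus "\<exists>m. \<forall>n\<in>{n. P n \<noteq> tzero}. n \<le> m" by blast
qed

lemma tp_carrier_I: "(\<And>n. (P::'c tpoly) n \<in> tate_alg v s) \<Longrightarrow> (\<exists>N. \<forall>n>N. P n = tzero) \<Longrightarrow> P \<in> tp_carrier v s"
  unfolding tp_carrier_def using fin_supp_iff by blast

lemma tp_carrier_coeff: "P \<in> tp_carrier v s \<Longrightarrow> P n \<in> tate_alg v s"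
  by (simp add: tp_carrier_def)

lemma tp_carrier_bound: "(P::'c tpoly) \<in> tp_carrier v s \<Longrightarrow> \<exists>N. \<forall>n>N. P n = tzero"
  unfolding tp_carrier_def using fin_supp_iff by blast

lemma tp_tau_I: "P \<in> tp_carrier v s \<Longrightarrow> P 0 = tzero \<Longrightarrow> P \<in> tp_tau_carrier v s"
  by (simp add: tp_tau_carrier_def)
lemma tp_tau_D: "P \<in> tp_tau_carrier v s \<Longrightarrow> P \<in> tp_carrier v s" "P \<in> tp_tau_carrier v s \<Longrightarrow> P 0 = tzero"
  by (simp_all add: tp_tau_carrier_def)

lemma tp_zero_carrier[simp]: "tp_zero \<in> tp_carrier v s"
  by (rule tp_carrier_I) (simp_all add: tp_zero_def)
lemma tp_zero_tau[simp]: "tp_zero \<in> tp_tau_carrier v s"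
  by (rule tp_tau_I) (simp, simp add: tp_zero_def)

lemma tp_const_carrier: "c \<in> tate_alg v s \<Longrightarrow> tp_const c \<in> tp_carrier v s"
  by (rule tp_carrier_I) (auto simp: tp_const_def)

lemma tp_tau_pow_carrier: "tp_tau_pow i \<in> tp_carrier v s"
  by (rule tp_carrier_I) (auto simp: tp_tau_pow_def)

lemma tp_add_carrier: assumes "P \<in> tp_carrier v s" "Q \<in> tp_carrier v s" shows "tp_add P Q \<in> tp_carrier v s"
proof (rule tp_carrier_I)
  show "tp_add P Q n \<in> tate_alg v s" for n
    using tate_tadd[OF tp_carrier_coeff[OF assms(1)] tp_carrier_coeff[OF assms(2)]]
    by (simp add: tp_add_def tadd_def)
  obtain N1 where N1: "\<forall>n>N1. P n = tzero" using assms(1) tp_carrier_bound by blast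
  obtain N2 where N2: "\<forall>n>N2. Q n = tzero" using assms(2) tp_carrier_bound by blast
  note N1 N2
  thus "\<exists>N. \<forall>n>N. tp_add P Q n = tzero"
    by (intro exI[of _ "max N1 N2"]) (auto simp: tp_add_def tzero_def)
qed

lemma tp_sub_carrier: assumes "P \<in> tp_carrier v s" "Q \<in> tp_carrier v s" shows "tp_sub P Q \<in> tp_carrier v s"
proof (rule tp_carrier_I)
  show "tp_sub P Q n \<in> tate_alg v s" for n
    using tate_diff[OF tp_carrier_coeff[OF assms(1)] tp_carrier_coeff[OF assms(2)]]
    by (simp add: tp_sub_def)
  obtain N1 where N1: "\<forall>n>N1. P n = tzero" using assms(1) tp_carrier_bound by blast
  obtain N2 where N2: "\<forall>n>N2. Q n = tzero" using assms(2) tp_carrier_bound by blast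
  note N1 N2
  thus "\<exists>N. \<forall>n>N. tp_sub P Q n = tzero"
    by (intro exI[of _ "max N1 N2"]) (auto simp: tp_sub_def tzero_def)
qed

lemma tp_mul_carrier: assumes "P \<in> tp_carrier v s" "Q \<in> tp_carrier v s" shows "tp_mul q P Q \<in> tp_carrier v s"
proof (rule tp_carrier_I)
  show "tp_mul q P Q n \<in> tate_alg v s" for n
    unfolding tp_mul_apply
    by (rule tate_sum) (simp, intro tate_tmul tate_ttaus tp_carrier_coeff[OF assms(1)] tp_carrier_coeff[OF assms(2)])
  obtain N1 where N1: "\<forall>n>N1. P n = tzero" using assms(1) tp_carrier_bound by blast
  obtain N2 where N2: "\<forall>n>N2. Q n = tzero" using assms(2) tp_carrier_bound by blast
  note N = N1 N2
  have "tp_mul q P Q n = tzero" if n: "n > N1 + N2" for n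
  proof -
    have "tmul (P i) ((ttau q ^^ i) (Q (n - i))) = tzero" if "i \<le> n" for i
    proof (cases "i > N1")
      case True thus ?thesis using N by simp
    next
      case False hence "n - i > N2" using n by simp
      thus ?thesis using N by simp
    qed
    thus ?thesis unfolding tp_mul_apply by (auto simp: tzero_def intro!: ext)
  qed
  thus "\<exists>N. \<forall>n>N. tp_mul q P Q n = tzero" by blast
qed

lemma tp_add_tau: "P \<in> tp_tau_carrier v s \<Longrightarrow> Q \<in> tp_tau_carrier v s \<Longrightarrow> tp_add P Q \<in> tp_tau_carrier v s"
  by (intro tp_tau_I tp_add_carrier) (auto simp: tp_tau_carrier_def tp_add_def tzero_def)
lemma tp_sub_tau: "P \<in> tp_tau_carrier v s \<Longrightarrow> Q \<in> tp_tau_carrier v s \<Longrightarrow> tp_sub P Q \<in> tp_tau_carrier v s"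
  by (intro tp_tau_I tp_sub_carrier) (auto simp: tp_tau_carrier_def tp_sub_def tzero_def)
lemma tp_mul_tau_left: "P \<in> tp_tau_carrier v s \<Longrightarrow> Q \<in> tp_carrier v s \<Longrightarrow> tp_mul q P Q \<in> tp_tau_carrier v s"
  by (intro tp_tau_I tp_mul_carrier) (auto simp: tp_tau_carrier_def tp_mul_0)
lemma tp_mul_tau_right: "P \<in> tp_carrier v s \<Longrightarrow> Q \<in> tp_tau_carrier v s \<Longrightarrow> tp_mul q P Q \<in> tp_tau_carrier v s"
  by (intro tp_tau_I tp_mul_carrier) (auto simp: tp_tau_carrier_def tp_mul_0)

end

context dctx begin

lemma Fq_iff: "x \<in> Fq q \<longleftrightarrow> (x::'c) ^ q = x" by (simp add: Fq_def)
lemma Fq_0[simp]: "(0::'c) \<in> Fq q" by (simp add: Fq_iff)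
lemma Fq_1[simp]: "(1::'c) \<in> Fq q" by (simp add: Fq_iff)
lemma Fq_add: "x \<in> Fq q \<Longrightarrow> y \<in> Fq q \<Longrightarrow> (x + y :: 'c) \<in> Fq q" by (simp add: Fq_iff frob)
lemma Fq_mult: "x \<in> Fq q \<Longrightarrow> y \<in> Fq q \<Longrightarrow> (x * y :: 'c) \<in> Fq q" by (simp add: Fq_iff power_mult_distrib)
lemma Fq_sum: assumes "\<And>i. i \<in> I \<Longrightarrow> f i \<in> Fq q" shows "(\<Sum>i\<in>I. f i :: 'c) \<in> Fq q"
proof (cases "finite I")
  case True thus ?thesis using assms by (induction I rule: finite_induct) (simp_all add: Fq_add)
qed simp

lemma FqTheta_I: "(\<And>i. coeff P i \<in> Fq q) \<Longrightarrow> poly P (\<theta>::'c) \<in> FqTheta q \<theta>"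
  unfolding FqTheta_def by blast
lemma FqTheta_E: "x \<in> FqTheta q (\<theta>::'c) \<Longrightarrow> (\<And>P. (\<And>i. coeff P i \<in> Fq q) \<Longrightarrow> x = poly P \<theta> \<Longrightarrow> R) \<Longrightarrow> R"
  unfolding FqTheta_def by blast
lemma FqTheta_0[simp]: "0 \<in> FqTheta q (\<theta>::'c)"
  using FqTheta_I[of 0 \<theta>] by simp
lemma FqTheta_Fq: "x \<in> Fq q \<Longrightarrow> x \<in> FqTheta q (\<theta>::'c)"
  using FqTheta_I[of "[:x:]" \<theta>] by (simp add: coeff_pCons split: nat.splits)
lemma FqTheta_theta: "\<theta> \<in> FqTheta q (\<theta>::'c)"
  using FqTheta_I[of "[:0,1:]" \<theta>] by (simp add: coeff_pCons split: nat.splits)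
lemma FqTheta_add: "x \<in> FqTheta q \<theta> \<Longrightarrow> y \<in> FqTheta q \<theta> \<Longrightarrow> (x + y :: 'c) \<in> FqTheta q \<theta>"
proof -
  assume x: "x \<in> FqTheta q \<theta>" and y: "y \<in> FqTheta q \<theta>"
  obtain P where P: "\<And>i. coeff P i \<in> Fq q" "x = poly P \<theta>" using x unfolding FqTheta_def by blast
  obtain Q where Q: "\<And>i. coeff Q i \<in> Fq q" "y = poly Q \<theta>" using y unfolding FqTheta_def by blast
  have "poly (P + Q) \<theta> \<in> FqTheta q \<theta>" by (rule FqTheta_I) (simp add: Fq_add P Q)
  thus ?thesis using P Q by simp
qed
lemma FqTheta_mult: "x \<in> FqTheta q \<theta> \<Longrightarrow> y \<in> FqTheta q \<theta> \<Longrightarrow> (x * y :: 'c) \<in> FqTheta q \<theta>"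
proof -
  assume x: "x \<in> FqTheta q \<theta>" and y: "y \<in> FqTheta q \<theta>"
  obtain P where P: "\<And>i. coeff P i \<in> Fq q" "x = poly P \<theta>" using x unfolding FqTheta_def by blast
  obtain Q where Q: "\<And>i. coeff Q i \<in> Fq q" "y = poly Q \<theta>" using y unfolding FqTheta_def by blast
  have "poly (P * Q) \<theta> \<in> FqTheta q \<theta>" by (rule FqTheta_I) (simp add: coeff_mult Fq_sum Fq_mult P Q)
  thus ?thesis using P Q by simp
qed
lemma FqTheta_sum: assumes "\<And>i. i \<in> I \<Longrightarrow> f i \<in> FqTheta q \<theta>" shows "(\<Sum>i\<in>I. f i :: 'c) \<in> FqTheta q \<theta>"
proof (cases "finite I")
  case True thus ?thesis using assms by (induction I rule: finite_induct) (simp_all add: FqTheta_add)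
qed simp

lemma A_t_I: "(\<And>\<alpha>. \<alpha> \<notin> mindex s \<Longrightarrow> a \<alpha> = 0) \<Longrightarrow> finite {\<alpha>. a \<alpha> \<noteq> 0} \<Longrightarrow>
   (\<And>\<alpha>. a \<alpha> \<in> FqTheta q \<theta>) \<Longrightarrow> (a :: 'c tate) \<in> A_t s q \<theta>"
  by (simp add: A_t_def)

lemma A_t_tate: assumes "a \<in> A_t s q \<theta>" shows "(a::'c tate) \<in> tate_alg v s"
proof (rule tate_I)
  show "a \<alpha> = 0" if "\<alpha> \<notin> mindex s" for \<alpha> using assms that by (simp add: A_t_def)
  show "finite {\<alpha>. e \<le> v (a \<alpha>)}" if "0 < e" for e
    by (rule finite_subset[of _ "{\<alpha>. a \<alpha> \<noteq> 0}"]) (use assms that in \<open>auto simp: A_t_def\<close>)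
qed

lemma Fq_t_tate: assumes "c \<in> Fq_t s q" shows "(c::'c tate) \<in> tate_alg v s"
proof (rule tate_I)
  show "c \<alpha> = 0" if "\<alpha> \<notin> mindex s" for \<alpha> using assms that by (simp add: Fq_t_def)
  show "finite {\<alpha>. e \<le> v (c \<alpha>)}" if "0 < e" for e
    by (rule finite_subset[of _ "{\<alpha>. c \<alpha> \<noteq> 0}"]) (use assms that in \<open>auto simp: Fq_t_def\<close>)
qed

lemma Fq_t_A_t: "c \<in> Fq_t s q \<Longrightarrow> (c::'c tate) \<in> A_t s q \<theta>"
  by (auto simp: Fq_t_def A_t_def FqTheta_Fq)

lemma Fq_t_ttau: "c \<in> Fq_t s q \<Longrightarrow> ttau q (c::'c tate) = c"
  by (rule ext) (simp add: Fq_t_def ttau_def Fq_iff)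
lemma Fq_t_ttaus: "c \<in> Fq_t s q \<Longrightarrow> (ttau q ^^ k) (c::'c tate) = c"
  by (induction k) (simp_all add: Fq_t_ttau)

lemma tconst_A_t: "x \<in> FqTheta q \<theta> \<Longrightarrow> tconst (x::'c) \<in> A_t s q \<theta>"
  by (rule A_t_I) (auto simp: tconst_def mindex_zero intro: finite_subset[of _ "{\<lambda>_. 0}"])

lemma tone_Fq_t: "(tone::'c tate) \<in> Fq_t s q"
  by (auto simp: Fq_t_def tone_def tconst_def mindex_zero intro: finite_subset[of _ "{\<lambda>_. 0}"])
lemma tzero_Fq_t: "(tzero::'c tate) \<in> Fq_t s q"
  by (auto simp: Fq_t_def)

lemma A_t_van: "a \<in> A_t s q \<theta> \<Longrightarrow> van (a::'c tate)"
  using A_t_tate tate_van by blast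

lemma A_t_tadd: assumes "a \<in> A_t s q \<theta>" "b \<in> A_t s q \<theta>" shows "tadd a b \<in> A_t s q (\<theta>::'c)"
proof (rule A_t_I)
  show "tadd a b \<alpha> = 0" if "\<alpha> \<notin> mindex s" for \<alpha> using assms that by (simp add: A_t_def tadd_def)
  show "finite {\<alpha>. tadd a b \<alpha> \<noteq> 0}"
    by (rule finite_subset[of _ "{\<alpha>. a \<alpha> \<noteq> 0} \<union> {\<alpha>. b \<alpha> \<noteq> 0}"]) (use assms in \<open>auto simp: A_t_def tadd_def\<close>)
  show "tadd a b \<alpha> \<in> FqTheta q \<theta>" for \<alpha> using assms by (simp add: A_t_def tadd_def FqTheta_add)
qed

lemma A_t_tmul: assumes a: "a \<in> A_t s q \<theta>" and b: "b \<in> A_t s q \<theta>" shows "tmul a b \<in> A_t s q (\<theta>::'c)"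
proof (rule A_t_I)
  have "tmul a b \<in> tate_alg v s" using a b by (intro tate_tmul A_t_tate)
  thus "tmul a b \<alpha> = 0" if "\<alpha> \<notin> mindex s" for \<alpha> using that by (rule tate_out)
  let ?A = "{\<alpha>. a \<alpha> \<noteq> 0}" and ?B = "{\<alpha>. b \<alpha> \<noteq> 0}"
  have fAB: "finite (?A \<times> ?B)" using a b by (simp add: A_t_def)
  have "{\<alpha>. tmul a b \<alpha> \<noteq> 0} \<subseteq> (\<lambda>(\<beta>,\<gamma>) i. \<beta> i + \<gamma> i) ` (?A \<times> ?B)"
  proof
    fix \<alpha> assume al: "\<alpha> \<in> {\<alpha>. tmul a b \<alpha> \<noteq> 0}"
    then obtain \<beta> where bt: "\<beta> \<in> le_set \<alpha>" and nz: "a \<beta> * b (\<lambda>i. \<alpha> i - \<beta> i) \<noteq> 0"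
      unfolding tmul_le by (auto elim: sum.not_neutral_contains_not_neutral)
    let ?\<gamma> = "\<lambda>i. \<alpha> i - \<beta> i"
    have A: "\<beta> \<in> ?A" and B: "?\<gamma> \<in> ?B" using nz by auto
    have eq: "\<alpha> = (\<lambda>(\<beta>,\<gamma>) i. \<beta> i + \<gamma> i) (\<beta>, ?\<gamma>)" using bt by (auto simp: le_set_def intro!: ext)
    show "\<alpha> \<in> (\<lambda>(\<beta>,\<gamma>) i. \<beta> i + \<gamma> i) ` (?A \<times> ?B)"
      unfolding image_iff using eq A B by blast
  qed
  moreover have "finite ((\<lambda>(\<beta>,\<gamma>) i. \<beta> i + \<gamma> i) ` (?A \<times> ?B))" using fAB by (rule finite_imageI)
  ultimately show "finite {\<alpha>. tmul a b \<alpha> \<noteq> 0}" by (rule finite_subset)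
  show "tmul a b \<alpha> \<in> FqTheta q \<theta>" for \<alpha>
    unfolding tmul_le using a b by (intro FqTheta_sum FqTheta_mult) (auto simp: A_t_def)
qed

end

definition single :: "(nat \<Rightarrow> nat) \<Rightarrow> 'c::field \<Rightarrow> 'c tate" where
  "single \<alpha> x = (\<lambda>\<beta>. if \<beta> = \<alpha> then x else 0)"

context dctx begin

lemma single_A_t: "\<alpha> \<in> mindex s \<Longrightarrow> x \<in> FqTheta q \<theta> \<Longrightarrow> single \<alpha> (x::'c) \<in> A_t s q \<theta>"
  by (rule A_t_I) (auto simp: single_def intro: finite_subset[of _ "{\<alpha>}"])

lemma single_Fq_t: "\<alpha> \<in> mindex s \<Longrightarrow> x \<in> Fq q \<Longrightarrow> single \<alpha> (x::'c) \<in> Fq_t s q"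
  by (auto simp: Fq_t_def single_def intro: finite_subset[of _ "{\<alpha>}"])

lemma single_van: "\<alpha> \<in> mindex s \<Longrightarrow> van (single \<alpha> (x::'c))"
  using mindex_fs by (auto simp: van_def single_def)

lemma A_t_induct:
  assumes a: "a \<in> A_t s q (\<theta>::'c)"
    and fq: "\<And>c. c \<in> Fq_t s q \<Longrightarrow> P c"
    and add: "\<And>a b. a \<in> A_t s q \<theta> \<Longrightarrow> b \<in> A_t s q \<theta> \<Longrightarrow> P a \<Longrightarrow> P b \<Longrightarrow> P (tadd a b)"
    and th: "\<And>a. a \<in> A_t s q \<theta> \<Longrightarrow> P a \<Longrightarrow> P (tmul (tconst \<theta>) a)"
  shows "P a"
proof -
  have sing: "P (single \<alpha> (poly p \<theta>))" if al: "\<alpha> \<in> mindex s" and cp: "\<forall>i. coeff p i \<in> Fq q" for \<alpha> p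
    using cp
  proof (induction p)
    case 0
    have e: "single \<alpha> (poly 0 \<theta>) = tzero" by (rule ext) (simp add: single_def)
    show ?case unfolding e by (rule fq[OF tzero_Fq_t])
  next
    case (pCons c p)
    have cp': "\<forall>i. coeff p i \<in> Fq q"
    proof
      fix i show "coeff p i \<in> Fq q" using pCons.prems[rule_format, of "Suc i"] by simp
    qed
    have c: "c \<in> Fq q" using pCons.prems[rule_format, of 0] by simp
    have IH: "P (single \<alpha> (poly p \<theta>))" using pCons.IH cp' by blast
    have yA: "single \<alpha> (poly p \<theta>) \<in> A_t s q \<theta>"
      using al cp' by (intro single_A_t FqTheta_I) auto
    have eq: "single \<alpha> (poly (pCons c p) \<theta>) = tadd (single \<alpha> c) (tmul (tconst \<theta>) (single \<alpha> (poly p \<theta>)))"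
      unfolding tadd_def tmul_tconst_left[OF single_van[OF al]] by (rule ext) (simp add: single_def)
    have cA: "single \<alpha> c \<in> A_t s q \<theta>" using al c by (intro single_A_t FqTheta_Fq)
    have tA: "tmul (tconst \<theta>) (single \<alpha> (poly p \<theta>)) \<in> A_t s q \<theta>"
      by (intro A_t_tmul tconst_A_t FqTheta_theta yA)
    show ?case unfolding eq
      by (rule add[OF cA tA]) (use fq single_Fq_t[OF al c] th[OF yA IH] in auto)
  qed
  have main: "\<forall>a. a \<in> A_t s q \<theta> \<and> {\<alpha>. a \<alpha> \<noteq> 0} \<subseteq> S \<longrightarrow> P a" if "finite S" for S
    using that
  proof (induction S rule: finite_induct)
    case empty
    show ?case
    proof (intro allI impI)
      fix a assume "a \<in> A_t s q \<theta> \<and> {\<alpha>. a \<alpha> \<noteq> 0} \<subseteq> {}"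
      hence e: "a = tzero" by (auto simp: tzero_def intro!: ext)
      show "P a" unfolding e by (rule fq[OF tzero_Fq_t])
    qed
  next
    case (insert \<alpha> S)
    show ?case
    proof (intro allI impI)
      fix a assume h: "a \<in> A_t s q \<theta> \<and> {\<alpha>. a \<alpha> \<noteq> 0} \<subseteq> insert \<alpha> S"
      define a' where "a' = (\<lambda>\<beta>. if \<beta> = \<alpha> then 0 else a \<beta>)"
      have a'A: "a' \<in> A_t s q \<theta>"
      proof (rule A_t_I)
        show "a' \<beta> = 0" if "\<beta> \<notin> mindex s" for \<beta> using h that by (auto simp: a'_def A_t_def)
        show "finite {\<beta>. a' \<beta> \<noteq> 0}"
          by (rule finite_subset[of _ "{\<beta>. a \<beta> \<noteq> 0}"]) (use h in \<open>auto simp: a'_def A_t_def\<close>)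
        show "a' \<beta> \<in> FqTheta q \<theta>" for \<beta> using h by (auto simp: a'_def A_t_def)
      qed
      have "{\<beta>. a' \<beta> \<noteq> 0} \<subseteq> S" using h by (auto simp: a'_def)
      hence Pa': "P a'" using insert.IH a'A by blast
      show "P a"
      proof (cases "a \<alpha> = 0")
        case True
        hence "a = a'" by (auto simp: a'_def intro!: ext)
        thus ?thesis using Pa' by simp
      next
        case False
        hence al: "\<alpha> \<in> mindex s" using h by (auto simp: A_t_def)
        have "a \<alpha> \<in> FqTheta q \<theta>" using h by (simp add: A_t_def)
        then obtain p where p: "\<And>i. coeff p i \<in> Fq q" "a \<alpha> = poly p \<theta>" unfolding FqTheta_def by blast
        have Ps: "P (single \<alpha> (a \<alpha>))" using sing[OF al] p by simp
        have sA: "single \<alpha> (a \<alpha>) \<in> A_t s q \<theta>" using al h by (intro single_A_t) (auto simp: A_t_def)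
        have "a = tadd a' (single \<alpha> (a \<alpha>))" by (auto simp: a'_def single_def tadd_def intro!: ext)
        thus ?thesis using add[OF a'A sA Pa' Ps] by simp
      qed
    qed
  qed
  show ?thesis using main[of "{\<alpha>. a \<alpha> \<noteq> 0}"] a by (auto simp: A_t_def)
qed

end

lemma tp_zero_apply[simp]: "tp_zero n = tzero" by (simp add: tp_zero_def)

lemma tp_add_zero[simp]: "tp_add tp_zero tp_zero = tp_zero"
  by (intro ext) (simp add: tp_add_def)

lemma tp_eqI: "(\<And>n \<alpha>. P n \<alpha> = Q n \<alpha>) \<Longrightarrow> P = Q" by (intro ext)

lemma tp_const_mul: "tp_mul q (tp_const a) (tp_const b) = tp_const (tmul a b)"
  by (rule ext, subst tp_mul_const_left) (simp add: tp_const_def)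

lemma tp_const_tadd: "tp_const (tadd a b) = tp_add (tp_const a) (tp_const b)"
  by (rule ext)+ (simp add: tp_const_def tp_add_def tadd_def)

lemma tp_mul_tone_left: "(\<And>n. van (X n)) \<Longrightarrow> tp_mul q (tp_const tone) X = X"
  by (rule ext) (simp add: tp_mul_const_left tmul_tone_left)

context dctx begin

lemma tp_carrier_van: "X \<in> tp_carrier v s \<Longrightarrow> van ((X::'c tpoly) n)"
  using tp_carrier_coeff tate_van by blast

lemma tp_mul_tone_right: "(\<And>n. van ((X::'c tpoly) n)) \<Longrightarrow> tp_mul q X (tp_const tone) = X"
  by (rule ext) (simp add: tp_mul_const_right tmul_tone_right)

lemma tp_mul_Fq_comm: "c \<in> Fq_t s q \<Longrightarrow> tp_mul q (X::'c tpoly) (tp_const c) = tp_mul q (tp_const c) X"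
  by (rule ext) (simp add: tp_mul_const_right tp_mul_const_left Fq_t_ttaus tmul_comm)

lemma tp_const_comm: "tp_mul q (tp_const a) (tp_mul q (tp_const b) (X::'c tpoly)) = tp_mul q (tp_const b) (tp_mul q (tp_const a) X)"
  by (simp add: tp_mul_assoc[symmetric] tp_const_mul tmul_comm)

end

locale dmod = dctx v q for v :: "'c::field \<Rightarrow> real" and q +
  fixes s :: nat and \<theta> :: 'c and \<phi> :: "'c tate \<Rightarrow> 'c tpoly" and r :: nat
  assumes drin: "drinfeld_module v s q \<theta> \<phi> r"
begin

abbreviation "AA \<equiv> A_t s q \<theta>"
abbreviation "DD \<equiv> Der v s q \<theta> \<phi>"

lemma phi_carrier: "a \<in> AA \<Longrightarrow> \<phi> a \<in> tp_carrier v s" using drin by (simp add: drinfeld_module_def)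
lemma phi_add: "a \<in> AA \<Longrightarrow> b \<in> AA \<Longrightarrow> \<phi> (tadd a b) = tp_add (\<phi> a) (\<phi> b)" using drin by (simp add: drinfeld_module_def)
lemma phi_mul: "a \<in> AA \<Longrightarrow> b \<in> AA \<Longrightarrow> \<phi> (tmul a b) = tp_mul q (\<phi> a) (\<phi> b)" using drin by (simp add: drinfeld_module_def)
lemma phi_Fq: "c \<in> Fq_t s q \<Longrightarrow> \<phi> c = tp_const c" using drin by (simp add: drinfeld_module_def)
lemma r_ge1: "1 \<le> r" using drin by (simp add: drinfeld_module_def)
lemma phi_th0: "\<phi> (tconst \<theta>) 0 = tconst \<theta>" using drin by (simp add: drinfeld_module_def)
lemma phi_th_gt: "i > r \<Longrightarrow> \<phi> (tconst \<theta>) i = tzero" using drin by (simp add: drinfeld_module_def)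

lemma th_A: "tconst \<theta> \<in> AA" by (intro tconst_A_t FqTheta_theta)
lemma tone_A: "tone \<in> AA" using tone_Fq_t by (rule Fq_t_A_t)

lemma phi0: assumes "a \<in> AA" shows "\<phi> a 0 = a"
proof (rule A_t_induct[OF assms])
  fix c :: "'c tate" assume "c \<in> Fq_t s q" thus "\<phi> c 0 = c" by (simp add: phi_Fq tp_const_def)
next
  fix a b assume "a \<in> AA" "b \<in> AA" "\<phi> a 0 = a" "\<phi> b 0 = b"
  thus "\<phi> (tadd a b) 0 = tadd a b" using phi_add[of a b] by (simp add: tp_add_def tadd_def)
next
  fix a assume "a \<in> AA" "\<phi> a 0 = a"
  thus "\<phi> (tmul (tconst \<theta>) a) 0 = tmul (tconst \<theta>) a" by (simp add: phi_mul th_A tp_mul_0 phi_th0)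
qed

lemma DerD:
  assumes "\<eta> \<in> DD"
  shows "\<And>a. a \<notin> AA \<Longrightarrow> \<eta> a = tp_zero"
    and "\<And>a. a \<in> AA \<Longrightarrow> \<eta> a \<in> tp_tau_carrier v s"
    and "\<And>a b. a \<in> AA \<Longrightarrow> b \<in> AA \<Longrightarrow> \<eta> (tadd a b) = tp_add (\<eta> a) (\<eta> b)"
    and "\<And>c a. c \<in> Fq_t s q \<Longrightarrow> a \<in> AA \<Longrightarrow> \<eta> (tmul c a) = tp_mul q (tp_const c) (\<eta> a)"
    and "\<And>a b. a \<in> AA \<Longrightarrow> b \<in> AA \<Longrightarrow> \<eta> (tmul a b) = tp_add (tp_mul q (tp_const a) (\<eta> b)) (tp_mul q (\<eta> a) (\<phi> b))"
  using assms by (simp_all add: Der_def)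

lemma DerI:
  assumes "\<And>a. a \<notin> AA \<Longrightarrow> \<eta> a = tp_zero"
    and "\<And>a. a \<in> AA \<Longrightarrow> \<eta> a \<in> tp_tau_carrier v s"
    and "\<And>a b. a \<in> AA \<Longrightarrow> b \<in> AA \<Longrightarrow> \<eta> (tadd a b) = tp_add (\<eta> a) (\<eta> b)"
    and "\<And>c a. c \<in> Fq_t s q \<Longrightarrow> a \<in> AA \<Longrightarrow> \<eta> (tmul c a) = tp_mul q (tp_const c) (\<eta> a)"
    and "\<And>a b. a \<in> AA \<Longrightarrow> b \<in> AA \<Longrightarrow> \<eta> (tmul a b) = tp_add (tp_mul q (tp_const a) (\<eta> b)) (tp_mul q (\<eta> a) (\<phi> b))"
  shows "\<eta> \<in> DD"
  using assms by (simp add: Der_def)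

lemma Der_zero: "(\<lambda>a. tp_zero) \<in> DD"
  by (rule DerI) (simp_all add: tp_add_zero)

lemma Der_sub: assumes e: "\<eta> \<in> DD" and z: "\<zeta> \<in> DD" shows "bd_sub \<eta> \<zeta> \<in> DD"
proof (rule DerI)
  show "bd_sub \<eta> \<zeta> a = tp_zero" if "a \<notin> AA" for a
    using DerD(1)[OF e that] DerD(1)[OF z that] by (simp add: bd_sub_def, intro tp_eqI) (simp add: tp_sub_def)
  show "bd_sub \<eta> \<zeta> a \<in> tp_tau_carrier v s" if "a \<in> AA" for a
    using DerD(2)[OF e that] DerD(2)[OF z that] by (simp add: bd_sub_def tp_sub_tau)
  show "bd_sub \<eta> \<zeta> (tadd a b) = tp_add (bd_sub \<eta> \<zeta> a) (bd_sub \<eta> \<zeta> b)" if "a \<in> AA" "b \<in> AA" for a b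
    using DerD(3)[OF e that] DerD(3)[OF z that] by (simp add: bd_sub_def tp_sub_def tp_add_def algebra_simps)
  show "bd_sub \<eta> \<zeta> (tmul c a) = tp_mul q (tp_const c) (bd_sub \<eta> \<zeta> a)" if "c \<in> Fq_t s q" "a \<in> AA" for c a
    using DerD(4)[OF e that] DerD(4)[OF z that] by (simp add: bd_sub_def tp_mul_sub_right)
  show "bd_sub \<eta> \<zeta> (tmul a b) = tp_add (tp_mul q (tp_const a) (bd_sub \<eta> \<zeta> b)) (tp_mul q (bd_sub \<eta> \<zeta> a) (\<phi> b))"
    if "a \<in> AA" "b \<in> AA" for a b
    using DerD(5)[OF e that] DerD(5)[OF z that]
    by (simp add: bd_sub_def tp_mul_sub_right tp_mul_sub_left) (simp add: tp_sub_def tp_add_def algebra_simps)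
qed

lemma Der_add: assumes e: "\<eta> \<in> DD" and z: "\<zeta> \<in> DD" shows "(\<lambda>a. tp_add (\<eta> a) (\<zeta> a)) \<in> DD"
proof (rule DerI)
  show "tp_add (\<eta> a) (\<zeta> a) = tp_zero" if "a \<notin> AA" for a
    using DerD(1)[OF e that] DerD(1)[OF z that] by (intro tp_eqI) (simp add: tp_add_def)
  show "tp_add (\<eta> a) (\<zeta> a) \<in> tp_tau_carrier v s" if "a \<in> AA" for a
    using DerD(2)[OF e that] DerD(2)[OF z that] by (simp add: tp_add_tau)
  show "tp_add (\<eta> (tadd a b)) (\<zeta> (tadd a b)) = tp_add (tp_add (\<eta> a) (\<zeta> a)) (tp_add (\<eta> b) (\<zeta> b))" if "a \<in> AA" "b \<in> AA" for a b
    using DerD(3)[OF e that] DerD(3)[OF z that] by (simp add: tp_add_def algebra_simps)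
  show "tp_add (\<eta> (tmul c a)) (\<zeta> (tmul c a)) = tp_mul q (tp_const c) (tp_add (\<eta> a) (\<zeta> a))" if "c \<in> Fq_t s q" "a \<in> AA" for c a
    using DerD(4)[OF e that] DerD(4)[OF z that] by (simp add: tp_mul_add_right)
  show "tp_add (\<eta> (tmul a b)) (\<zeta> (tmul a b)) = tp_add (tp_mul q (tp_const a) (tp_add (\<eta> b) (\<zeta> b))) (tp_mul q (tp_add (\<eta> a) (\<zeta> a)) (\<phi> b))"
    if "a \<in> AA" "b \<in> AA" for a b
    using DerD(5)[OF e that] DerD(5)[OF z that]
    by (simp add: tp_mul_add_right tp_mul_add_left) (simp add: tp_add_def algebra_simps)
qed

lemma Der_smul: assumes e: "\<eta> \<in> DD" and f: "f \<in> tate_alg v s" shows "(\<lambda>a. tp_mul q (tp_const f) (\<eta> a)) \<in> DD"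
proof (rule DerI)
  show "tp_mul q (tp_const f) (\<eta> a) = tp_zero" if "a \<notin> AA" for a
    using DerD(1)[OF e that] by simp
  show "tp_mul q (tp_const f) (\<eta> a) \<in> tp_tau_carrier v s" if "a \<in> AA" for a
    using DerD(2)[OF e that] f by (simp add: tp_mul_tau_right tp_const_carrier)
  show "tp_mul q (tp_const f) (\<eta> (tadd a b)) = tp_add (tp_mul q (tp_const f) (\<eta> a)) (tp_mul q (tp_const f) (\<eta> b))" if "a \<in> AA" "b \<in> AA" for a b
    using DerD(3)[OF e that] by (simp add: tp_mul_add_right)
  show "tp_mul q (tp_const f) (\<eta> (tmul c a)) = tp_mul q (tp_const c) (tp_mul q (tp_const f) (\<eta> a))" if "c \<in> Fq_t s q" "a \<in> AA" for c a
    using DerD(4)[OF e that] by (simp add: tp_const_comm)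
  show "tp_mul q (tp_const f) (\<eta> (tmul a b)) = tp_add (tp_mul q (tp_const a) (tp_mul q (tp_const f) (\<eta> b))) (tp_mul q (tp_mul q (tp_const f) (\<eta> a)) (\<phi> b))"
    if "a \<in> AA" "b \<in> AA" for a b
    using DerD(5)[OF e that] by (simp add: tp_mul_add_right tp_mul_assoc tp_const_comm)
qed

end

context dmod begin

lemma Der_lincomb_aux:
  assumes "\<And>i. i < (k::nat) \<Longrightarrow> \<delta> i \<in> DD" "\<And>i. i < k \<Longrightarrow> c i \<in> tate_alg v s"
  shows "(\<lambda>a n \<alpha>. \<Sum>i<k. tp_mul q (tp_const (c i)) (\<delta> i a) n \<alpha>) \<in> DD"
  using assms
proof (induction k)
  case 0
  have "(\<lambda>a n \<alpha>. \<Sum>i<0. tp_mul q (tp_const (c i)) (\<delta> i a) n \<alpha>) = (\<lambda>a. tp_zero)"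
    by (intro ext) simp
  thus ?case using Der_zero by simp
next
  case (Suc k)
  have e: "(\<lambda>a n \<alpha>. \<Sum>i<Suc k. tp_mul q (tp_const (c i)) (\<delta> i a) n \<alpha>) =
    (\<lambda>a. tp_add ((\<lambda>a n \<alpha>. \<Sum>i<k. tp_mul q (tp_const (c i)) (\<delta> i a) n \<alpha>) a) ((\<lambda>a. tp_mul q (tp_const (c k)) (\<delta> k a)) a))"
    by (intro ext) (simp add: tp_add_def)
  show ?case unfolding e
    by (rule Der_add) (use Suc in \<open>auto intro: Der_smul\<close>)
qed

lemma Der_lincomb:
  "(\<And>i. i < (k::nat) \<Longrightarrow> \<delta> i \<in> DD) \<Longrightarrow> (\<And>i. i < k \<Longrightarrow> c i \<in> tate_alg v s) \<Longrightarrow> bd_lincomb q c \<delta> k \<in> DD"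
  unfolding bd_lincomb_def by (rule Der_lincomb_aux)

definition etam :: "'c tpoly \<Rightarrow> 'c tate \<Rightarrow> 'c tpoly" where
  "etam m = (\<lambda>a. if a \<in> AA then tp_sub (tp_mul q m (\<phi> a)) (tp_mul q (tp_const a) m) else tp_zero)"

lemma Der_si_Der: assumes m: "m \<in> tp_tau_carrier v s" shows "etam m \<in> DD"
proof (rule DerI)
  show "etam m a = tp_zero" if "a \<notin> AA" for a using that by (simp add: etam_def)
  show "etam m a \<in> tp_tau_carrier v s" if a: "a \<in> AA" for a
    using a by (simp add: etam_def tp_sub_tau tp_mul_tau_left tp_mul_tau_right m phi_carrier tp_const_carrier A_t_tate)
  show "etam m (tadd a b) = tp_add (etam m a) (etam m b)" if a: "a \<in> AA" and b: "b \<in> AA" for a b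
    using a b A_t_tadd[OF a b]
    by (simp add: etam_def phi_add tp_const_tadd tp_mul_add_right tp_mul_add_left)
       (intro tp_eqI, simp add: tp_add_def tp_sub_def)
  show "etam m (tmul c a) = tp_mul q (tp_const c) (etam m a)" if c: "c \<in> Fq_t s q" and a: "a \<in> AA" for c a
  proof -
    have cA: "c \<in> AA" using c by (rule Fq_t_A_t)
    have ca: "tmul c a \<in> AA" using cA a by (rule A_t_tmul)
    have e1: "tp_mul q m (tp_mul q (tp_const c) (\<phi> a)) = tp_mul q (tp_const c) (tp_mul q m (\<phi> a))"
      by (simp add: tp_mul_assoc[symmetric] tp_mul_Fq_comm[OF c])
    show ?thesis
      using a ca by (simp add: etam_def phi_mul cA phi_Fq[OF c] e1 tp_const_mul[of q, symmetric] tp_mul_assoc tp_mul_sub_right)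
  qed
  show "etam m (tmul a b) = tp_add (tp_mul q (tp_const a) (etam m b)) (tp_mul q (etam m a) (\<phi> b))"
    if a: "a \<in> AA" and b: "b \<in> AA" for a b
    using a b A_t_tmul[OF a b]
    by (simp add: etam_def phi_mul tp_const_mul[of q, symmetric] tp_mul_sub_right tp_mul_sub_left tp_mul_assoc)
       (intro tp_eqI, simp add: tp_add_def tp_sub_def)
qed

lemma Der_tone: assumes x: "\<xi> \<in> DD" shows "\<xi> tone = tp_zero"
proof -
  let ?X = "\<xi> tone"
  have Xc: "?X \<in> tp_carrier v s" using DerD(2)[OF x tone_A] by (rule tp_tau_D)
  have vn: "\<And>n. van (?X n)" using Xc by (rule tp_carrier_van)
  have "\<xi> (tmul tone tone) = tp_add (tp_mul q (tp_const tone) ?X) (tp_mul q ?X (\<phi> tone))"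
    using DerD(5)[OF x tone_A tone_A] .
  moreover have "tmul tone tone = (tone :: 'c tate)" using tate_van[OF tate_tone] by (rule tmul_tone_left)
  moreover have "\<phi> tone = tp_const tone" using tone_Fq_t by (rule phi_Fq)
  ultimately have e: "?X = tp_add ?X ?X" using vn by (simp add: tp_mul_tone_left tp_mul_tone_right)
  show ?thesis
  proof (rule tp_eqI)
    fix n \<alpha>
    have "?X n \<alpha> = ?X n \<alpha> + ?X n \<alpha>" using fun_cong[OF fun_cong[OF e, of n], of \<alpha>] by (simp add: tp_add_def)
    thus "?X n \<alpha> = tp_zero n \<alpha>" by (simp only: tp_zero_apply tzero_apply) (metis add_cancel_right_right)
  qed
qed

lemma Der_vanish: assumes x: "\<xi> \<in> DD" and th: "\<xi> (tconst \<theta>) = tp_zero" shows "\<xi> a = tp_zero"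
proof (cases "a \<in> AA")
  case False thus ?thesis using DerD(1)[OF x] by simp
next
  case True
  show ?thesis
  proof (rule A_t_induct[OF True])
    fix c :: "'c tate" assume c: "c \<in> Fq_t s q"
    have "tmul c tone = c" using tate_van[OF Fq_t_tate[OF c]] by (rule tmul_tone_right)
    hence "\<xi> c = \<xi> (tmul c tone)" by simp
    also have "\<dots> = tp_mul q (tp_const c) (\<xi> tone)" using DerD(4)[OF x c tone_A] .
    also have "\<dots> = tp_zero" using Der_tone[OF x] by simp
    finally show "\<xi> c = tp_zero" .
  next
    fix a b assume "a \<in> AA" "b \<in> AA" "\<xi> a = tp_zero" "\<xi> b = tp_zero"
    thus "\<xi> (tadd a b) = tp_zero" using DerD(3)[OF x] by simp
  next
    fix a assume a: "a \<in> AA" "\<xi> a = tp_zero"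
    thus "\<xi> (tmul (tconst \<theta>) a) = tp_zero" using DerD(5)[OF x th_A a(1)] th by simp
  qed
qed

lemma delta0_Der: "delta0 s q \<theta> \<phi> \<in> DD"
proof (rule DerI)
  show "delta0 s q \<theta> \<phi> a = tp_zero" if "a \<notin> AA" for a using that by (simp add: delta0_def)
  show "delta0 s q \<theta> \<phi> a \<in> tp_tau_carrier v s" if a: "a \<in> AA" for a
  proof -
    have "tp_sub (\<phi> a) (tp_const a) \<in> tp_carrier v s"
      using a by (intro tp_sub_carrier phi_carrier tp_const_carrier A_t_tate)
    moreover have "tp_sub (\<phi> a) (tp_const a) 0 = tzero"
      using phi0[OF a] by (intro ext) (simp add: tp_sub_def tp_const_def)
    ultimately show ?thesis using a by (simp add: delta0_def tp_tau_I)
  qed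
  show "delta0 s q \<theta> \<phi> (tadd a b) = tp_add (delta0 s q \<theta> \<phi> a) (delta0 s q \<theta> \<phi> b)" if a: "a \<in> AA" and b: "b \<in> AA" for a b
    using a b A_t_tadd[OF a b]
    by (simp add: delta0_def phi_add tp_const_tadd) (intro tp_eqI, simp add: tp_add_def tp_sub_def)
  show "delta0 s q \<theta> \<phi> (tmul c a) = tp_mul q (tp_const c) (delta0 s q \<theta> \<phi> a)" if c: "c \<in> Fq_t s q" and a: "a \<in> AA" for c a
  proof -
    have cA: "c \<in> AA" using c by (rule Fq_t_A_t)
    have ca: "tmul c a \<in> AA" using cA a by (rule A_t_tmul)
    show ?thesis
      using a ca by (simp add: delta0_def phi_mul cA phi_Fq[OF c] tp_const_mul[of q, symmetric] tp_mul_sub_right)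
  qed
  show "delta0 s q \<theta> \<phi> (tmul a b) = tp_add (tp_mul q (tp_const a) (delta0 s q \<theta> \<phi> b)) (tp_mul q (delta0 s q \<theta> \<phi> a) (\<phi> b))"
    if a: "a \<in> AA" and b: "b \<in> AA" for a b
    using a b A_t_tmul[OF a b]
    by (simp add: delta0_def phi_mul tp_const_mul[of q, symmetric] tp_mul_sub_right tp_mul_sub_left)
       (intro tp_eqI, simp add: tp_add_def tp_sub_def)
qed

end

context dmod begin

abbreviation "Phi \<equiv> \<phi> (tconst \<theta>)"

definition Eth :: "'c tpoly \<Rightarrow> 'c tpoly" where
  "Eth m = tp_sub (tp_mul q m Phi) (tp_mul q (tp_const (tconst \<theta>)) m)"

lemma etam_th: "etam m (tconst \<theta>) = Eth m"
  using th_A by (simp add: etam_def Eth_def)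

lemma Phi_carrier: "Phi \<in> tp_carrier v s" using th_A by (rule phi_carrier)

lemma Eth_tau: "m \<in> tp_tau_carrier v s \<Longrightarrow> Eth m \<in> tp_tau_carrier v s"
  unfolding Eth_def
  by (intro tp_sub_tau tp_mul_tau_left tp_mul_tau_right Phi_carrier tp_const_carrier tate_tconst)

lemma Eth_add: "Eth (tp_add m1 m2) = tp_add (Eth m1) (Eth m2)"
  unfolding Eth_def
  by (simp add: tp_mul_add_left tp_mul_add_right) (intro tp_eqI, simp add: tp_add_def tp_sub_def)

lemma Eth_zero: "Eth tp_zero = tp_zero"
  unfolding Eth_def by (intro tp_eqI) (simp add: tp_sub_def)

lemma sub_Eth_zero: "B n = tzero \<Longrightarrow> tp_sub B (Eth tp_zero) n = tzero"
  unfolding Eth_zero by (intro ext) (simp add: tp_sub_def)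

lemma tp_mul_single:
  assumes "\<And>i. i \<noteq> k \<Longrightarrow> m i = tzero"
  shows "tp_mul q m P n = (if k \<le> n then tmul (m k) ((ttau q ^^ k) (P (n - k))) else tzero)"
proof (cases "k \<le> n")
  case True
  have "tp_mul q m P n = (\<lambda>\<alpha>. \<Sum>i\<in>{k}. tmul (m i) ((ttau q ^^ i) (P (n - i))) \<alpha>)"
    unfolding tp_mul_apply
    by (rule ext, rule sum.mono_neutral_right) (use True assms in auto)
  thus ?thesis using True by simp
next
  case False
  have "tp_mul q m P n = (\<lambda>\<alpha>. \<Sum>i\<le>n. 0)"
    unfolding tp_mul_apply
    by (rule ext, rule sum.cong) (use False assms in auto)
  thus ?thesis using False by (auto intro!: ext)
qed

lemma reduction:
  assumes g: "g \<in> tate_alg v s" and gA: "tmul g (Phi r) = tone"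
  shows "B \<in> tp_tau_carrier v s \<Longrightarrow> (\<forall>n>N. B n = tzero) \<Longrightarrow>
    \<exists>m\<in>tp_tau_carrier v s. \<forall>n>r. tp_sub B (Eth m) n = tzero"
proof (induction N arbitrary: B)
  case 0
  show ?case
  proof (rule bexI[of _ tp_zero])
    show "\<forall>n>r. tp_sub B (Eth tp_zero) n = tzero"
    proof (intro allI impI sub_Eth_zero)
      fix n assume "r < n" thus "B n = tzero" using 0(2) r_ge1 by (simp add: tzero_def)
    qed
  qed simp
next
  case (Suc N)
  show ?case
  proof (cases "Suc N \<le> r")
    case True
    show ?thesis
    proof (rule bexI[of _ tp_zero])
      show "\<forall>n>r. tp_sub B (Eth tp_zero) n = tzero"
      proof (intro allI impI sub_Eth_zero)
        fix n assume "r < n" thus "B n = tzero" using Suc.prems(2) True by (simp add: tzero_def)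
      qed
    qed simp
  next
    case False
    define k where "k = Suc N - r"
    have k1: "1 \<le> k" and kN: "k + r = Suc N" and kle: "k < Suc N" using False r_ge1 by (auto simp: k_def)
    have Bc: "B \<in> tp_carrier v s" using Suc.prems(1) by (rule tp_tau_D)
    define m1 where "m1 = (\<lambda>n. if n = k then tmul (B (Suc N)) ((ttau q ^^ k) g) else tzero)"
    have m1_tau: "m1 \<in> tp_tau_carrier v s"
    proof (rule tp_tau_I)
      show "m1 \<in> tp_carrier v s"
        by (rule tp_carrier_I) (auto simp: m1_def intro!: tate_tmul tate_ttaus g tp_carrier_coeff[OF Bc])
      show "m1 0 = tzero" using k1 by (simp add: m1_def)
    qed
    have m1z: "\<And>i. i \<noteq> k \<Longrightarrow> m1 i = tzero" by (simp add: m1_def)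
    define B1 where "B1 = tp_sub B (Eth m1)"
    have B1_tau: "B1 \<in> tp_tau_carrier v s" unfolding B1_def using Suc.prems(1) Eth_tau[OF m1_tau] by (rule tp_sub_tau)
    have B1z: "\<forall>n>N. B1 n = tzero"
    proof (intro allI impI)
      fix n assume nN: "N < n"
      have th_part: "tp_mul q (tp_const (tconst \<theta>)) m1 n = tzero"
        using nN kle by (simp add: tp_mul_const_left m1_def)
      show "B1 n = tzero"
      proof (cases "n = Suc N")
        case True
        have nk: "n - k = r" using True kN by simp
        have "tp_mul q m1 Phi n = tmul (tmul (B (Suc N)) ((ttau q ^^ k) g)) ((ttau q ^^ k) (Phi r))"
          using tp_mul_single[OF m1z, where P=Phi and n=n] True kle nk by (simp add: m1_def)
        also have "\<dots> = tmul (B (Suc N)) ((ttau q ^^ k) (tmul g (Phi r)))"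
          by (simp add: tmul_assoc ttaus_tmul)
        also have "\<dots> = B (Suc N)" using gA tmul_tone_right[OF tp_carrier_van[OF Bc]] by simp
        finally have "tp_mul q m1 Phi n = B n" using True by simp
        thus ?thesis unfolding B1_def Eth_def using th_part by (intro ext) (simp add: tp_sub_def)
      next
        case False
        hence nS: "n > Suc N" using nN by simp
        have "Phi (n - k) = tzero" using nS kN by (intro phi_th_gt) simp
        hence "tp_mul q m1 Phi n = tzero"
          using tp_mul_single[OF m1z, where P=Phi and n=n] by simp
        moreover have "B n = tzero" using Suc.prems(2) nS by (simp add: tzero_def)
        ultimately show ?thesis unfolding B1_def Eth_def using th_part by (intro ext) (simp add: tp_sub_def)
      qed
    qed
    obtain m2 where m2: "m2 \<in> tp_tau_carrier v s" "\<forall>n>r. tp_sub B1 (Eth m2) n = tzero"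
      using Suc.IH[OF B1_tau B1z] by blast
    show ?thesis
    proof (rule bexI[of _ "tp_add m1 m2"])
      show "tp_add m1 m2 \<in> tp_tau_carrier v s" using m1_tau m2(1) by (rule tp_add_tau)
      show "\<forall>n>r. tp_sub B (Eth (tp_add m1 m2)) n = tzero"
      proof (intro allI impI)
        fix n assume "r < n"
        hence "tp_sub B1 (Eth m2) n = tzero" using m2(2) by simp
        thus "tp_sub B (Eth (tp_add m1 m2)) n = tzero"
          unfolding B1_def Eth_add by (simp add: tp_sub_def tp_add_def algebra_simps)
      qed
    qed
  qed
qed

end

lemma tmul_zero_fun[simp]: "tmul f (\<lambda>_. 0) \<alpha> = 0" "tmul (\<lambda>_. 0) f \<alpha> = 0"
  by (simp_all add: tmul_def)

context dmod begin

lemma lc_theta: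
  assumes d0: "\<delta> 0 = delta0 s q \<theta> \<phi>"
    and di: "\<And>i. 1 \<le> i \<Longrightarrow> i < r \<Longrightarrow> \<delta> i (tconst \<theta>) = tp_tau_pow i"
    and vc: "\<And>i. i < r \<Longrightarrow> van (c i)"
  shows "bd_lincomb q c \<delta> r (tconst \<theta>) n \<alpha> =
     (if n = 0 then 0 else tmul (c 0) (Phi n) \<alpha> + (if n < r then c n \<alpha> else 0))"
proof -
  have r0: "{..<r} = insert 0 {1..<r}" using r_ge1 by auto
  have "bd_lincomb q c \<delta> r (tconst \<theta>) n \<alpha> = (\<Sum>i<r. tmul (c i) (\<delta> i (tconst \<theta>) n) \<alpha>)"
    by (simp add: bd_lincomb_def tp_mul_const_left)
  also have "\<dots> = tmul (c 0) (\<delta> 0 (tconst \<theta>) n) \<alpha> + (\<Sum>i\<in>{1..<r}. tmul (c i) (\<delta> i (tconst \<theta>) n) \<alpha>)"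
    unfolding r0 by (subst sum.insert) auto
  also have "(\<Sum>i\<in>{1..<r}. tmul (c i) (\<delta> i (tconst \<theta>) n) \<alpha>) = (\<Sum>i\<in>{1..<r}. tmul (c i) (tp_tau_pow i n) \<alpha>)"
    by (rule sum.cong) (auto simp: di)
  also have "\<dots> = (if n \<noteq> 0 \<and> n < r then c n \<alpha> else 0)"
  proof (cases "n \<noteq> 0 \<and> n < r")
    case True
    have "(\<Sum>i\<in>{1..<r}. tmul (c i) (tp_tau_pow i n) \<alpha>) = (\<Sum>i\<in>{n}. tmul (c i) (tp_tau_pow i n) \<alpha>)"
      by (rule sum.mono_neutral_right) (use True in \<open>auto simp: tp_tau_pow_def\<close>)
    also have "\<dots> = c n \<alpha>" using vc[of n] True by (simp add: tp_tau_pow_def tmul_tone_right)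
    finally show ?thesis using True by simp
  next
    case False
    have "(\<Sum>i\<in>{1..<r}. tmul (c i) (tp_tau_pow i n) \<alpha>) = (\<Sum>i\<in>{1..<r}. 0)"
      by (rule sum.cong) (use False in \<open>auto simp: tp_tau_pow_def\<close>)
    thus ?thesis using False by auto
  qed
  also have "\<delta> 0 (tconst \<theta>) n = (if n = 0 then tzero else Phi n)"
    using th_A phi_th0 by (auto simp: d0 delta0_def tp_sub_def tp_const_def tzero_def intro!: ext)
  finally show ?thesis by auto
qed

end

lemma tmul_lcomm: "tmul x (tmul y z) = tmul y (tmul x z)"
  by (simp only: tmul_assoc[symmetric] tmul_comm[of x y])

context dmod begin

lemma main:
  fixes \<delta> :: "nat \<Rightarrow> 'c tate \<Rightarrow> 'c tpoly"
  assumes unit: "\<exists>g\<in>tate_alg v s. tmul g (Phi r) = tone"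
    and d0: "\<delta> 0 = delta0 s q \<theta> \<phi>"
    and di: "\<And>i. 1 \<le> i \<Longrightarrow> i < r \<Longrightarrow> \<delta> i \<in> DD \<and> \<delta> i (tconst \<theta>) = tp_tau_pow i"
  shows "(\<forall>i<r. \<delta> i \<in> DD) \<and>
         (\<forall>\<eta>\<in>DD. \<exists>c. (\<forall>i<r. c i \<in> tate_alg v s) \<and>
             bd_sub \<eta> (bd_lincomb q c \<delta> r) \<in> Der_si v s q \<theta> \<phi>) \<and>
         (\<forall>c. (\<forall>i<r. c i \<in> tate_alg v s) \<and> bd_lincomb q c \<delta> r \<in> Der_si v s q \<theta> \<phi>
             \<longrightarrow> (\<forall>i<r. c i = tzero))"
proof -
  obtain g where g: "g \<in> tate_alg v s" and gA: "tmul g (Phi r) = tone" using unit by blast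
  have diT: "\<And>i. 1 \<le> i \<Longrightarrow> i < r \<Longrightarrow> \<delta> i (tconst \<theta>) = tp_tau_pow i" using di by blast
  have P1: "\<forall>i<r. \<delta> i \<in> DD"
  proof (intro allI impI)
    fix i assume "i < r"
    show "\<delta> i \<in> DD"
    proof (cases "i = 0")
      case True thus ?thesis using d0 delta0_Der by simp
    next
      case False thus ?thesis using di \<open>i < r\<close> by simp
    qed
  qed
  have P2: "\<forall>\<eta>\<in>DD. \<exists>c. (\<forall>i<r. c i \<in> tate_alg v s) \<and> bd_sub \<eta> (bd_lincomb q c \<delta> r) \<in> Der_si v s q \<theta> \<phi>"
  proof
    fix \<eta> assume e: "\<eta> \<in> DD"
    define B where "B = \<eta> (tconst \<theta>)"
    have B_tau: "B \<in> tp_tau_carrier v s" unfolding B_def using DerD(2)[OF e th_A] .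
    obtain N where N: "\<forall>n>N. B n = tzero" using tp_carrier_bound[OF tp_tau_D(1)[OF B_tau]] by blast
    obtain m where m: "m \<in> tp_tau_carrier v s" and mr: "\<forall>n>r. tp_sub B (Eth m) n = tzero"
      using reduction[OF g gA B_tau N] by blast
    define B' where "B' = tp_sub B (Eth m)"
    have B'_tau: "B' \<in> tp_tau_carrier v s" unfolding B'_def using B_tau Eth_tau[OF m] by (rule tp_sub_tau)
    have B'c: "\<And>n. B' n \<in> tate_alg v s" using tp_tau_D(1)[OF B'_tau] by (rule tp_carrier_coeff)
    define c0 where "c0 = tmul (B' r) g"
    have c0t: "c0 \<in> tate_alg v s" unfolding c0_def using B'c g by (rule tate_tmul)
    have Phit: "\<And>n. Phi n \<in> tate_alg v s" using Phi_carrier by (rule tp_carrier_coeff)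
    define c where "c = (\<lambda>i. if i = 0 then c0 else (\<lambda>\<alpha>. B' i \<alpha> - tmul c0 (Phi i) \<alpha>))"
    have ct: "\<And>i. c i \<in> tate_alg v s"
      unfolding c_def using c0t B'c Phit by (auto intro!: tate_diff tate_tmul)
    define L where "L = bd_lincomb q c \<delta> r"
    have LD: "L \<in> DD" unfolding L_def using P1 ct by (intro Der_lincomb) auto
    define \<xi> where "\<xi> = bd_sub (bd_sub \<eta> L) (etam m)"
    have xD: "\<xi> \<in> DD" unfolding \<xi>_def by (intro Der_sub e LD Der_si_Der m)
    have Lth: "L (tconst \<theta>) n \<alpha> = B' n \<alpha>" for n \<alpha>
    proof -
      have lc: "L (tconst \<theta>) n \<alpha> = (if n = 0 then 0 else tmul (c 0) (Phi n) \<alpha> + (if n < r then c n \<alpha> else 0))"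
        unfolding L_def using d0 diT tate_van[OF ct] by (rule lc_theta)
      show ?thesis
      proof (cases "n = 0")
        case True
        thus ?thesis using lc tp_tau_D(2)[OF B'_tau] by simp
      next
        case n0: False
        show ?thesis
        proof (cases "n < r")
          case True
          thus ?thesis using lc n0 by (simp add: c_def)
        next
          case False
          show ?thesis
          proof (cases "n = r")
            case True
            have "tmul c0 (Phi r) = B' r"
              unfolding c0_def by (simp add: tmul_assoc gA tmul_tone_right tate_van[OF B'c])
            thus ?thesis using lc n0 True by (simp add: c_def)
          next
            case False
            hence nr: "n > r" using \<open>\<not> n < r\<close> by simp
            have "Phi n = tzero" using nr by (rule phi_th_gt)
            moreover have "B' n = tzero" using mr nr by (simp add: B'_def)
            ultimately show ?thesis using lc n0 nr by (simp add: c_def)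
          qed
        qed
      qed
    qed
    have xth: "\<xi> (tconst \<theta>) = tp_zero"
    proof (rule tp_eqI)
      fix n \<alpha>
      show "\<xi> (tconst \<theta>) n \<alpha> = tp_zero n \<alpha>"
        using Lth[of n \<alpha>] by (simp add: \<xi>_def bd_sub_def etam_th tp_sub_def B'_def B_def)
    qed
    have Dsi: "bd_sub \<eta> L \<in> Der_si v s q \<theta> \<phi>"
      unfolding Der_si_def
    proof (rule CollectI, rule bexI[OF _ m], rule allI)
      fix a
      have x0: "\<xi> a = tp_zero" using xD xth by (rule Der_vanish)
      have "bd_sub \<eta> L a = etam m a"
      proof (rule tp_eqI)
        fix n \<alpha>
        have "\<xi> a n \<alpha> = 0" using x0 by simp
        thus "bd_sub \<eta> L a n \<alpha> = etam m a n \<alpha>" by (simp add: \<xi>_def bd_sub_def tp_sub_def)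
      qed
      thus "bd_sub \<eta> L a = (if a \<in> AA then tp_sub (tp_mul q m (\<phi> a)) (tp_mul q (tp_const a) m) else tp_zero)"
        by (simp add: etam_def)
    qed
    show "\<exists>c. (\<forall>i<r. c i \<in> tate_alg v s) \<and> bd_sub \<eta> (bd_lincomb q c \<delta> r) \<in> Der_si v s q \<theta> \<phi>"
      using ct Dsi unfolding L_def by blast
  qed
  have P3: "\<forall>c. (\<forall>i<r. c i \<in> tate_alg v s) \<and> bd_lincomb q c \<delta> r \<in> Der_si v s q \<theta> \<phi> \<longrightarrow> (\<forall>i<r. c i = tzero)"
  proof (rule allI, rule impI)
    fix c assume h: "(\<forall>i<r. c i \<in> tate_alg v s) \<and> bd_lincomb q c \<delta> r \<in> Der_si v s q \<theta> \<phi>"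
    have ct: "\<And>i. i < r \<Longrightarrow> c i \<in> tate_alg v s" using h by blast
    obtain m where m: "m \<in> tp_tau_carrier v s"
      and mL: "\<forall>a. bd_lincomb q c \<delta> r a = (if a \<in> AA then tp_sub (tp_mul q m (\<phi> a)) (tp_mul q (tp_const a) m) else tp_zero)"
      using h unfolding Der_si_def by blast
    have LE: "bd_lincomb q c \<delta> r (tconst \<theta>) = Eth m" using mL th_A by (simp add: Eth_def)
    have lc: "\<And>n \<alpha>. bd_lincomb q c \<delta> r (tconst \<theta>) n \<alpha> = (if n = 0 then 0 else tmul (c 0) (Phi n) \<alpha> + (if n < r then c n \<alpha> else 0))"
      using d0 diT tate_van[OF ct] by (rule lc_theta)
    have mc: "m \<in> tp_carrier v s" using m by (rule tp_tau_D)
    have mz: "\<forall>k. m k = tzero"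
    proof (rule ccontr)
      assume "\<not> (\<forall>k. m k = tzero)"
      hence ne: "{k. m k \<noteq> tzero} \<noteq> {}" by blast
      have fin: "finite {k. m k \<noteq> tzero}" using mc by (simp add: tp_carrier_def)
      define K where "K = Max {k. m k \<noteq> tzero}"
      have mK: "m K \<noteq> tzero" unfolding K_def using Max_in[OF fin ne] by simp
      have Kmax: "m i = tzero" if iK: "i > K" for i
      proof (rule ccontr)
        assume "m i \<noteq> tzero"
        hence "i \<le> K" unfolding K_def using fin by (intro Max_ge) auto
        with iK show False by simp
      qed
      have K1: "K \<ge> 1" using mK tp_tau_D(2)[OF m] by (cases K) auto
      define n where "n = K + r"
      have nr: "n > r" and nK: "n > K" and n0: "n \<noteq> 0" using K1 r_ge1 by (auto simp: n_def)
      have sumK: "tp_mul q m Phi n = tmul (m K) ((ttau q ^^ K) (Phi r))"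
      proof -
        have "tp_mul q m Phi n = (\<lambda>\<alpha>. \<Sum>i\<in>{K}. tmul (m i) ((ttau q ^^ i) (Phi (n - i))) \<alpha>)"
          unfolding tp_mul_apply
        proof (rule ext, rule sum.mono_neutral_right)
          fix \<alpha>
          show "\<forall>i\<in>{..n} - {K}. tmul (m i) ((ttau q ^^ i) (Phi (n - i))) \<alpha> = 0"
          proof
            fix i assume i: "i \<in> {..n} - {K}"
            show "tmul (m i) ((ttau q ^^ i) (Phi (n - i))) \<alpha> = 0"
            proof (cases "i > K")
              case True thus ?thesis using Kmax by simp
            next
              case False
              hence "i < K" using i by simp
              hence "n - i > r" by (simp add: n_def)
              hence "Phi (n - i) = tzero" by (rule phi_th_gt)
              thus ?thesis by simp
            qed
          qed
        qed (auto simp: n_def)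
        thus ?thesis by (simp add: n_def)
      qed
      have "Eth m n = tp_zero n" using LE lc[of n] nr n0 phi_th_gt[OF nr] by (auto intro!: ext)
      moreover have "tp_mul q (tp_const (tconst \<theta>)) m n = tzero" using Kmax[OF nK] by (simp add: tp_mul_const_left)
      ultimately have "tp_mul q m Phi n = tzero"
        unfolding Eth_def by (auto simp: tp_sub_def tzero_def dest: fun_cong intro!: ext)
      hence z: "tmul (m K) ((ttau q ^^ K) (Phi r)) = tzero" using sumK by simp
      have "m K = tmul (m K) ((ttau q ^^ K) (tmul g (Phi r)))"
        using gA tmul_tone_right[OF tp_carrier_van[OF mc]] by simp
      also have "\<dots> = tmul ((ttau q ^^ K) g) (tmul (m K) ((ttau q ^^ K) (Phi r)))"
        by (simp add: ttaus_tmul tmul_lcomm)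
      also have "\<dots> = tzero" using z by simp
      finally show False using mK by simp
    qed
    have m0: "m = tp_zero" using mz by (intro ext) simp
    have L0: "\<And>n \<alpha>. bd_lincomb q c \<delta> r (tconst \<theta>) n \<alpha> = 0" using LE m0 Eth_zero by simp
    have "tmul (c 0) (Phi r) = tzero"
      using L0[of r] lc[of r] r_ge1 by (auto intro!: ext)
    hence c0: "c 0 = tzero"
    proof -
      assume z: "tmul (c 0) (Phi r) = tzero"
      have "c 0 = tmul (c 0) tone" using tmul_tone_right[OF tate_van[OF ct[of 0]]] r_ge1 by simp
      also have "\<dots> = tmul g (tmul (c 0) (Phi r))" by (simp add: gA[symmetric] tmul_lcomm)
      also have "\<dots> = tzero" using z by simp
      finally show ?thesis .
    qed
    show "\<forall>i<r. c i = tzero"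
    proof (intro allI impI)
      fix i assume ir: "i < r"
      show "c i = tzero"
      proof (cases "i = 0")
        case True thus ?thesis using c0 by simp
      next
        case False
        show ?thesis using L0[of i] lc[of i] False ir c0 by (auto intro!: ext)
      qed
    qed
  qed
  show ?thesis using P1 P2 P3 by blast
qed

end

theorem corollary5p4:
  fixes v :: "'c::field \<Rightarrow> real" and p q s r :: nat and \<theta> :: 'c
    and \<phi> :: "'c tate \<Rightarrow> 'c tpoly" and \<delta> :: "nat \<Rightarrow> 'c tate \<Rightarrow> 'c tpoly"
  assumes Cinf: "is_C_infinity p q \<theta> v"
    and drin: "drinfeld_module v s q \<theta> \<phi> r"
    and unit: "\<exists>g\<in>tate_alg v s. tmul g (\<phi> (tconst \<theta>) r) = tone"
    and d0: "\<delta> 0 = delta0 s q \<theta> \<phi>"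
    and di: "\<And>i. 1 \<le> i \<Longrightarrow> i < r \<Longrightarrow>
               \<delta> i \<in> Der v s q \<theta> \<phi> \<and> \<delta> i (tconst \<theta>) = tp_tau_pow i"
  shows "(\<forall>i<r. \<delta> i \<in> Der v s q \<theta> \<phi>) \<and>
         (\<forall>\<eta>\<in>Der v s q \<theta> \<phi>. \<exists>c. (\<forall>i<r. c i \<in> tate_alg v s) \<and>
             bd_sub \<eta> (bd_lincomb q c \<delta> r) \<in> Der_si v s q \<theta> \<phi>) \<and>
         (\<forall>c. (\<forall>i<r. c i \<in> tate_alg v s) \<and> bd_lincomb q c \<delta> r \<in> Der_si v s q \<theta> \<phi>
             \<longrightarrow> (\<forall>i<r. c i = tzero))"
proof -
  have pp: "prime p" and ch: "CHAR('c) = p" using Cinf by (simp_all add: is_C_infinity_def)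
  obtain e where e: "e > 0" "q = p ^ e" using Cinf by (auto simp: is_C_infinity_def)
  have dc: "dctx v q"
  proof
    show "0 < q" using e pp by (simp add: prime_gt_0_nat)
    show "(x + y) ^ q = x ^ q + y ^ q" for x y :: 'c using frob_pow[OF pp ch] e by simp
    show "0 \<le> v x" for x using Cinf by (simp add: is_C_infinity_def)
    show "v x = 0 \<longleftrightarrow> x = 0" for x using Cinf by (simp add: is_C_infinity_def)
    show "v (x * y) = v x * v y" for x y using Cinf by (simp add: is_C_infinity_def)
    show "v (x + y) \<le> max (v x) (v y)" for x y using Cinf by (simp add: is_C_infinity_def)
  qed
  interpret dmod v q s \<theta> \<phi> r
    using dc drin by (simp add: dmod_def dmod_axioms_def)
  show ?thesis by (rule main[OF unit d0 di])
qed

end
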